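(* Let $m\ge1$, $\mathbf n=(n_1,\dots,n_m)$ nonnegative integers, $\mathbf c=(c_1,\dots,c_m)\in\mathbb C^m$, $a_1,\dots,a_m\in\mathbb C$, and let $f(z_1,\dots,z_m)\in W_{\mathbf c}^{\mathbf n}$. Then (for parameter values at which all denominators are nonzero) \begin{gather*} \prod_{i=1}^m \frac{\big(a_i ^2 q, q, c_i z_i , c_i/z_i;q,p\big)_{n_i}}{(a_i c_i,c_i/a_i, a_i qz_i, a_iq/z_i;q,p)_{n_i}} f(z_1,\dots, z_m)\\ =\sum_{k_1=0}^{n_1}\cdots\sum_{k_m=0}^{n_m}\prod_{i=1}^m q^{k_i}\frac{\theta\big(a_i^2 q^{2k_i};p\big)}{\theta\big(a_i^2;p\big)} \frac{\big(q^{-n_i},a_i ^2, a_i q/c_i, a_i c_i q^{n_i}, a_i z_i ,a_i/z_i;q,p\big)_{k_i}}{\big(q,a_i^2 q^{n_i+1}, a_i c_i, a_i q^{1-n_i}/c_i , a_i q z_i,a_i q/z_i;q,p\big)_{k_i}}\; f\big(a_1 q^{k_1},\dots, a_m q^{k_m}\big). \end{gather*}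
   Context: Fix complex numbers $q,p$ with $0<|q|<1$, $|p|<1$. The modified Jacobi theta function is $\theta(x;p)=\prod_{j\ge0}(1-p^jx)(1-p^{j+1}/x)$ for $x\neq0$, and $\theta(x_1,\dots,x_r;p)=\prod_i\theta(x_i;p)$. The theta shifted factorial is $(a;q,p)_n=\prod_{k=0}^{n-1}\theta(aq^k;p)$ for $n\ge1$, $(a;q,p)_0=1$, and $(a_1,\dots,a_r;q,p)_n=\prod_i(a_i;q,p)_n$. The space $W_{\mathbf c}^{\mathbf n}$ is the complex span of all functions $g_{\mathbf k}(z_1,\dots,z_m)/\prod_{i=1}^m(c_iz_i,c_i/z_i;q,p)_{k_i}$ with $0\le k_i\le n_i$, where $g_{\mathbf k}$ ranges over functions holomorphic in $z_1,\dots,z_m\neq0$, invariant under $z_i\mapsto 1/z_i$ for each $i$, and satisfying $g_{\mathbf k}(z_1,\dots,pz_i,\dots,z_m)=p^{-k_i}z_i^{-2k_i}g_{\mathbf k}(z_1,\dots,z_m)$ for each $i$. *)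

theory Defs
  imports "HOL-Analysis.Analysis"
begin

definition theta :: "complex \<Rightarrow> complex \<Rightarrow> complex" where
  "theta x p = (\<Prod>j. (1 - p ^ j * x) * (1 - p ^ Suc j / x))"

definition tpoch :: "complex \<Rightarrow> complex \<Rightarrow> complex \<Rightarrow> nat \<Rightarrow> complex" where
  "tpoch a q p n = (\<Prod>k<n. theta (a * q ^ k) p)"

text \<open>Admissible numerators g_k: functions of the m variables z_0..z_(m-1)
  (points are maps nat => complex; coordinates >= m are ignored), holomorphic
  in each variable on the punctured plane, invariant under z_i -> 1/z_i, and
  quasi-periodic under z_i -> p z_i with multiplier p^(-k_i) z_i^(-2 k_i).\<close>
definition Wgen :: "nat \<Rightarrow> complex \<Rightarrow> (nat \<Rightarrow> nat) \<Rightarrow> ((nat \<Rightarrow> complex) \<Rightarrow> complex) \<Rightarrow> bool" where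
  "Wgen m p k g \<longleftrightarrow>
     (\<forall>z z'. (\<forall>i<m. z i = z' i) \<longrightarrow> g z = g z') \<and>
     (\<forall>z. (\<forall>j<m. z j \<noteq> 0) \<longrightarrow> (\<forall>i<m.
        (\<lambda>w. g (z(i := w))) holomorphic_on (- {0}) \<and>
        g (z(i := 1 / z i)) = g z \<and>
        g (z(i := p * z i)) = p powi (- int (k i)) * z i powi (- 2 * int (k i)) * g z))"

inductive_set Wspace :: "nat \<Rightarrow> complex \<Rightarrow> complex \<Rightarrow> (nat \<Rightarrow> complex) \<Rightarrow> (nat \<Rightarrow> nat)
    \<Rightarrow> ((nat \<Rightarrow> complex) \<Rightarrow> complex) set"
  for m q p c n where
  gen: "\<lbrakk>\<forall>i<m. k i \<le> n i; Wgen m p k g\<rbrakk> \<Longrightarrow>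
        (\<lambda>z. g z / (\<Prod>i<m. tpoch (c i * z i) q p (k i) * tpoch (c i / z i) q p (k i)))
          \<in> Wspace m q p c n"
| zero: "(\<lambda>z. 0) \<in> Wspace m q p c n"
| add: "\<lbrakk>f \<in> Wspace m q p c n; h \<in> Wspace m q p c n\<rbrakk> \<Longrightarrow> (\<lambda>z. f z + h z) \<in> Wspace m q p c n"
| smult: "f \<in> Wspace m q p c n \<Longrightarrow> (\<lambda>z. s * f z) \<in> Wspace m q p c n"

end

theory Submission
  imports Defs "HOL-Complex_Analysis.Complex_Analysis"
begin


definition pp :: "complex \<Rightarrow> complex \<Rightarrow> complex \<Rightarrow> complex" where
  "pp p u w = (\<Prod>j. (1 - p ^ j * u) * (1 - p ^ j * w))"

lemma pp_fac_bound:
  fixes p u w :: complex assumes "norm p < 1"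
  shows "norm ((1 - p ^ j * u) * (1 - p ^ j * w) - 1) \<le> norm p ^ j * (norm u + norm w + norm u * norm w)"
proof -
  have e: "(1 - p ^ j * u) * (1 - p ^ j * w) - 1 = p ^ j * (- u - w + p ^ j * u * w)"
    by (simp add: algebra_simps)
  have pj: "norm (p ^ j) \<le> 1" using assms by (simp add: norm_power power_le_one)
  have "norm (- u - w + p ^ j * u * w) \<le> norm (- u - w) + norm (p ^ j * u * w)"
    by (rule norm_triangle_ineq)
  also have "norm (- u - w) \<le> norm u + norm w"
    by (metis minus_diff_eq norm_diff_ineq norm_minus_cancel add.commute diff_conv_add_uminus norm_triangle_ineq4 )
  also have "norm (p ^ j * u * w) \<le> norm u * norm w"
    using pj by (simp add: norm_mult mult_left_le_one_le mult.assoc)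
  finally have "norm (- u - w + p ^ j * u * w) \<le> norm u + norm w + norm u * norm w" by simp
  thus ?thesis
    unfolding e norm_mult norm_power by (simp add: mult_left_mono)
qed

lemma pp_summable:
  fixes p u w :: complex assumes "norm p < 1"
  shows "summable (\<lambda>j. norm ((1 - p ^ j * u) * (1 - p ^ j * w) - 1))"
proof (rule summable_comparison_test')
  show "summable (\<lambda>j. norm p ^ j * (norm u + norm w + norm u * norm w))"
    using assms by (intro summable_mult2 summable_geometric) auto
  fix j :: nat
  show "norm (norm ((1 - p ^ j * u) * (1 - p ^ j * w) - 1)) \<le> norm p ^ j * (norm u + norm w + norm u * norm w)"
    using pp_fac_bound[OF assms] by simp
qed

lemma pp_has_prod:
  assumes "norm p < 1"
  shows "(\<lambda>j. (1 - p ^ j * u) * (1 - p ^ j * w)) has_prod pp p u w"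
proof -
  have "abs_convergent_prod (\<lambda>j. (1 - p ^ j * u) * (1 - p ^ j * w))"
    by (rule summable_imp_abs_convergent_prod[OF pp_summable[OF assms]])
  hence "convergent_prod (\<lambda>j. (1 - p ^ j * u) * (1 - p ^ j * w))"
    by (rule abs_convergent_prod_imp_convergent_prod)
  thus ?thesis unfolding pp_def by (simp add: convergent_prod_has_prod_iff[symmetric])
qed

lemma pp_tendsto:
  assumes "norm p < 1"
  shows "(\<lambda>N. \<Prod>j<N. (1 - p ^ j * u) * (1 - p ^ j * w)) \<longlonglongrightarrow> pp p u w"
  by (rule has_prod_imp_tendsto'[OF pp_has_prod[OF assms]])

lemma pp_eq_0_iff:
  assumes "norm p < 1"
  shows "pp p u w = 0 \<longleftrightarrow> (\<exists>j. (1 - p ^ j * u) * (1 - p ^ j * w) = 0)"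
proof -
  have "pp p u w = 0 \<longleftrightarrow> 0 \<in> range (\<lambda>j. (1 - p ^ j * u) * (1 - p ^ j * w))"
    by (rule has_prod_eq_0_iff[OF pp_has_prod[OF assms]])
  also have "\<dots> \<longleftrightarrow> (\<exists>j. (1 - p ^ j * u) * (1 - p ^ j * w) = 0)"
    by (metis (mono_tags, lifting) rangeE rangeI)
  finally show ?thesis .
qed

lemma theta_pp: "theta x p = pp p x (p / x)"
proof -
  have "\<And>j. (1 - p ^ j * x) * (1 - p ^ Suc j / x) = (1 - p ^ j * x) * (1 - p ^ j * (p / x))"
    by (simp add: power_Suc)
  thus ?thesis unfolding theta_def pp_def by presburger
qed

lemma tele_prod:
  fixes p c :: complex
  shows "(1 - c) * (\<Prod>j<N. (1 - p ^ Suc j * c)) = (\<Prod>j<N. (1 - p ^ j * c)) * (1 - p ^ N * c)"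
proof (induction N)
  case 0 then show ?case by simp
next
  case (Suc N)
  have "(1 - c) * (\<Prod>j<Suc N. (1 - p ^ Suc j * c)) = ((1 - c) * (\<Prod>j<N. (1 - p ^ Suc j * c))) * (1 - p ^ Suc N * c)"
    by (simp add: mult_ac)
  also have "\<dots> = (\<Prod>j<N. (1 - p ^ j * c)) * (1 - p ^ N * c) * (1 - p ^ Suc N * c)" using Suc by simp
  also have "\<dots> = (\<Prod>j<Suc N. (1 - p ^ j * c)) * (1 - p ^ Suc N * c)" by (simp add: mult_ac)
  finally show ?case .
qed

lemma theta_p_div:
  assumes "p \<noteq> 0"
  shows "theta (p / x) p = theta x p"
proof -
  have "\<And>j. (1 - p ^ j * (p / x)) * (1 - p ^ Suc j / (p / x)) = (1 - p ^ j * x) * (1 - p ^ Suc j / x)"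
  proof -
    fix j
    have a: "p ^ j * (p / x) = p ^ Suc j / x" by (simp add: power_Suc mult_ac)
    have b: "p ^ Suc j / (p / x) = p ^ j * x" using assms by (simp add: power_Suc)
    show "(1 - p ^ j * (p / x)) * (1 - p ^ Suc j / (p / x)) = (1 - p ^ j * x) * (1 - p ^ Suc j / x)"
      unfolding a b by (rule mult.commute)
  qed
  thus ?thesis unfolding theta_def by presburger
qed

lemma theta_p_mult:
  assumes "p \<noteq> 0"
  shows "theta (p * x) p = theta (1 / x) p"
proof -
  have "\<And>j. (1 - p ^ j * (p * x)) * (1 - p ^ Suc j / (p * x)) = (1 - p ^ j * (1 / x)) * (1 - p ^ Suc j / (1 / x))"
  proof -
    fix j
    have a: "p ^ j * (p * x) = p ^ Suc j / (1 / x)" by (simp add: power_Suc mult_ac)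
    have b: "p ^ Suc j / (p * x) = p ^ j * (1 / x)" using assms by (simp add: power_Suc)
    show "(1 - p ^ j * (p * x)) * (1 - p ^ Suc j / (p * x)) = (1 - p ^ j * (1 / x)) * (1 - p ^ Suc j / (1 / x))"
      unfolding a b by (rule mult.commute)
  qed
  thus ?thesis unfolding theta_def by presburger
qed

lemma theta_1: assumes "norm p < 1" shows "theta 1 p = 0"
  unfolding theta_pp using pp_eq_0_iff[OF assms, of 1 "p/1"] by (metis diff_self mult_zero_left power_0 mult_1)

lemma theta_partial_tendsto:
  assumes "norm p < 1"
  shows "(\<lambda>N. (\<Prod>j<N. (1 - p ^ j * x)) * (\<Prod>j<N. (1 - p ^ Suc j / x))) \<longlonglongrightarrow> theta x p"
proof -
  have "(\<lambda>N. \<Prod>j<N. (1 - p ^ j * x) * (1 - p ^ j * (p / x))) \<longlonglongrightarrow> theta x p"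
    unfolding theta_pp by (rule pp_tendsto[OF assms])
  moreover have "\<And>N. (\<Prod>j<N. (1 - p ^ j * x) * (1 - p ^ j * (p / x))) = (\<Prod>j<N. (1 - p ^ j * x)) * (\<Prod>j<N. (1 - p ^ Suc j / x))"
    by (simp add: prod.distrib power_Suc mult.commute)
  ultimately show ?thesis by simp
qed

lemma pow_tendsto_0: assumes "norm (p::complex) < 1" shows "(\<lambda>N. p ^ N * c) \<longlonglongrightarrow> 0"
proof -
  have "(\<lambda>N. p ^ N) \<longlonglongrightarrow> 0" using assms by (rule LIMSEQ_power_zero)
  from tendsto_mult[OF this tendsto_const[of c]] show ?thesis by simp
qed

lemma theta_inv_aux:
  assumes "norm p < 1"
  shows "theta (1 / x) p * (1 - x) = theta x p * (1 - 1 / x)"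
proof -
  define A where "A x N = (\<Prod>j<N. (1 - p ^ j * x)) * (\<Prod>j<N. (1 - p ^ Suc j / x))" for x N
  have eq: "A (1/x) N * ((1 - x) * (1 - p ^ N * (1/x))) = A x N * ((1 - 1/x) * (1 - p ^ N * x))" for N
  proof -
    have t1: "(1 - x) * (\<Prod>j<N. (1 - p ^ Suc j * x)) = (\<Prod>j<N. (1 - p ^ j * x)) * (1 - p ^ N * x)"
      by (rule tele_prod)
    have t2: "(1 - 1/x) * (\<Prod>j<N. (1 - p ^ Suc j * (1/x))) = (\<Prod>j<N. (1 - p ^ j * (1/x))) * (1 - p ^ N * (1/x))"
      by (rule tele_prod)
    have a1: "A (1/x) N = (\<Prod>j<N. (1 - p ^ j * (1/x))) * (\<Prod>j<N. (1 - p ^ Suc j * x))"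
      unfolding A_def by simp
    have a2: "A x N = (\<Prod>j<N. (1 - p ^ j * x)) * (\<Prod>j<N. (1 - p ^ Suc j * (1/x)))"
      unfolding A_def by simp
    have "A (1/x) N * ((1 - x) * (1 - p ^ N * (1/x))) = 
          ((\<Prod>j<N. (1 - p ^ j * (1/x))) * (1 - p ^ N * (1/x))) * ((1 - x) * (\<Prod>j<N. (1 - p ^ Suc j * x)))"
      unfolding a1 by (simp add: mult_ac)
    also have "\<dots> = ((1 - 1/x) * (\<Prod>j<N. (1 - p ^ Suc j * (1/x)))) * ((\<Prod>j<N. (1 - p ^ j * x)) * (1 - p ^ N * x))"
      unfolding t1 t2 ..
    also have "\<dots> = A x N * ((1 - 1/x) * (1 - p ^ N * x))"
      unfolding a2 by (simp add: mult_ac)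
    finally show ?thesis .
  qed
  have l1: "(\<lambda>N. A (1/x) N * ((1 - x) * (1 - p ^ N * (1/x)))) \<longlonglongrightarrow> theta (1/x) p * ((1 - x) * (1 - 0))"
    unfolding A_def by (intro tendsto_intros theta_partial_tendsto assms pow_tendsto_0)
  have l2: "(\<lambda>N. A x N * ((1 - 1/x) * (1 - p ^ N * x))) \<longlonglongrightarrow> theta x p * ((1 - 1/x) * (1 - 0))"
    unfolding A_def by (intro tendsto_intros theta_partial_tendsto assms pow_tendsto_0)
  from l1 l2 eq have "theta (1/x) p * ((1 - x) * (1 - 0)) = theta x p * ((1 - 1/x) * (1 - 0))"
    using LIMSEQ_unique by simp
  thus ?thesis by simp
qed

lemma theta_inv:
  assumes "norm p < 1" "x \<noteq> 0"
  shows "theta (1 / x) p = - theta x p / x"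
proof (cases "x = 1")
  case True then show ?thesis using theta_1[OF assms(1)] by simp
next
  case False
  have "theta (1 / x) p * (1 - x) = theta x p * (1 - 1 / x)" by (rule theta_inv_aux[OF assms(1)])
  also have "theta x p * (1 - 1 / x) = (- theta x p / x) * (1 - x)" using assms(2) by (simp add: field_simps)
  finally have "theta (1 / x) p * (1 - x) = (- theta x p / x) * (1 - x)" .
  moreover have "1 - x \<noteq> 0" using False by simp
  ultimately show ?thesis using mult_cancel_right by blast
qed

lemma theta_zero:
  assumes "norm p < 1" "p \<noteq> 0" "x \<noteq> 0" "theta x p = 0"
  shows "\<exists>k::int. x = p powi k"
proof -
  obtain j where j: "(1 - p ^ j * x) * (1 - p ^ j * (p / x)) = 0"
    using assms(4) unfolding theta_pp pp_eq_0_iff[OF assms(1)] by blast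
  show ?thesis
  proof (cases "1 - p ^ j * x = 0")
    case True
    hence "x = inverse (p ^ j)" using assms(2) by (simp add: field_simps)
    hence "x = p powi (- int j)" by (simp add: power_int_minus)
    thus ?thesis by blast
  next
    case False
    hence "1 - p ^ j * (p / x) = 0" using j by simp
    hence "x = p ^ Suc j" using assms(3) by (simp add: field_simps)
    hence "x = p powi (int (Suc j))" by (metis power_int_of_nat)
    thus ?thesis by blast
  qed
qed

lemma theta_T:
  assumes "norm p < 1"
  shows "theta y p = (1 - y) * pp p (p * y) (p / y)"
proof -
  have eq: "(\<Prod>j<N. (1 - p ^ j * y) * (1 - p ^ j * (p / y))) * (1 - p ^ N * y)
          = (1 - y) * (\<Prod>j<N. (1 - p ^ j * (p * y)) * (1 - p ^ j * (p / y)))" for N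
  proof -
    have "(1 - y) * (\<Prod>j<N. (1 - p ^ Suc j * y)) = (\<Prod>j<N. (1 - p ^ j * y)) * (1 - p ^ N * y)"
      by (rule tele_prod)
    moreover have "(\<Prod>j<N. (1 - p ^ j * (p * y))) = (\<Prod>j<N. (1 - p ^ Suc j * y))"
      by (simp add: power_Suc mult_ac)
    ultimately show ?thesis by (simp add: prod.distrib mult_ac)
  qed
  have l1: "(\<lambda>N. (\<Prod>j<N. (1 - p ^ j * y) * (1 - p ^ j * (p / y))) * (1 - p ^ N * y)) \<longlonglongrightarrow> pp p y (p/y) * (1 - 0)"
    by (intro tendsto_intros pp_tendsto assms pow_tendsto_0)
  have l2: "(\<lambda>N. (1 - y) * (\<Prod>j<N. (1 - p ^ j * (p * y)) * (1 - p ^ j * (p / y)))) \<longlonglongrightarrow> (1 - y) * pp p (p*y) (p/y)"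
    by (intro tendsto_intros pp_tendsto assms)
  from l1 l2 eq have "pp p y (p/y) * (1 - 0) = (1 - y) * pp p (p*y) (p/y)"
    using LIMSEQ_unique by simp
  thus ?thesis unfolding theta_pp by simp
qed

lemma T1_nonzero:
  assumes "norm p < 1"
  shows "pp p p p \<noteq> 0"
proof
  assume "pp p p p = 0"
  then obtain j where "(1 - p ^ j * p) * (1 - p ^ j * p) = 0" using pp_eq_0_iff[OF assms] by blast
  hence "p ^ Suc j = 1" by (simp add: power_Suc mult_ac)
  hence "norm p ^ Suc j = 1" by (metis norm_one norm_power)
  moreover have "norm p ^ Suc j < 1"
  proof -
    have "norm p ^ j \<le> 1" using assms by (simp add: power_le_one)
    hence "norm p * norm p ^ j \<le> norm p" using mult_left_le[of "norm p ^ j" "norm p"] by simp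
    thus ?thesis using assms by simp
  qed
  ultimately show False by simp
qed

lemma pp_holo_ball:
  fixes p \<alpha> \<beta> z :: complex
  assumes p: "norm p < 1" and z: "z \<noteq> 0"
  defines "r \<equiv> norm z / 2"
  shows "(\<lambda>y. pp p (\<alpha> * y) (\<beta> / y)) holomorphic_on ball z r"
proof -
  have r: "r > 0" using z unfolding r_def by simp
  have nz: "y \<noteq> 0" and ry: "norm y \<ge> r" and yR: "norm y \<le> norm z + r" if "y \<in> cball z r" for y
  proof -
    have d: "norm (z - y) \<le> r" using that by (simp add: dist_norm)
    have "norm z \<le> norm y + norm (z - y)" by (metis add.commute diff_add_cancel norm_triangle_ineq)
    thus "norm y \<ge> r" using d unfolding r_def by simp
    thus "y \<noteq> 0" using r by auto
    have "norm y \<le> norm z + norm (z - y)" by (metis norm_triangle_sub norm_minus_commute)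
    thus "norm y \<le> norm z + r" using d by simp
  qed
  define F where "F n y = (1 - p ^ n * (\<alpha> * y)) * (1 - p ^ n * (\<beta> / y))" for n y
  define Cu where "Cu = norm \<alpha> * (norm z + r)"
  define Cw where "Cw = norm \<beta> / r"
  have cont: "continuous_on (cball z r) (F n)" for n
    unfolding F_def using nz by (intro continuous_intros) auto
  have "uniformly_convergent_on (cball z r) (\<lambda>N y. \<Sum>n<N. norm (F n y - 1))"
  proof (rule Weierstrass_m_test')
    show "summable (\<lambda>n. norm p ^ n * (Cu + Cw + Cu * Cw))"
      using p by (intro summable_mult2 summable_geometric) auto
    fix n y assume y: "y \<in> cball z r"
    have u: "norm (\<alpha> * y) \<le> Cu" unfolding Cu_def norm_mult using yR[OF y] by (simp add: mult_left_mono)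
    have w: "norm (\<beta> / y) \<le> Cw" unfolding Cw_def norm_divide using ry[OF y] r
      by (intro divide_left_mono) (auto intro!: mult_pos_pos)
    have "norm (F n y - 1) \<le> norm p ^ n * (norm (\<alpha> * y) + norm (\<beta> / y) + norm (\<alpha> * y) * norm (\<beta> / y))"
      unfolding F_def by (rule pp_fac_bound[OF p])
    also have "\<dots> \<le> norm p ^ n * (Cu + Cw + Cu * Cw)"
      using u w r unfolding Cu_def by (intro mult_left_mono add_mono mult_mono) auto
    finally show "norm (norm (F n y - 1)) \<le> norm p ^ n * (Cu + Cw + Cu * Cw)" by simp
  qed
  hence "uniformly_convergent_on (cball z r) (\<lambda>N y. \<Prod>n<N. F n y)"
    by (intro uniformly_convergent_on_prod' cont compact_cball)
  then obtain g where g: "uniform_limit (cball z r) (\<lambda>N y. \<Prod>n<N. F n y) g sequentially"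
    unfolding uniformly_convergent_on_def by blast
  have gp: "g y = pp p (\<alpha> * y) (\<beta> / y)" if "y \<in> cball z r" for y
  proof -
    have "(\<lambda>N. \<Prod>n<N. F n y) \<longlonglongrightarrow> g y" using tendsto_uniform_limitI[OF g that] .
    moreover have "(\<lambda>N. \<Prod>n<N. F n y) \<longlonglongrightarrow> pp p (\<alpha> * y) (\<beta> / y)" unfolding F_def by (rule pp_tendsto[OF p])
    ultimately show ?thesis using LIMSEQ_unique by blast
  qed
  have ul: "uniform_limit (cball z r) (\<lambda>N y. \<Prod>n<N. F n y) (\<lambda>y. pp p (\<alpha> * y) (\<beta> / y)) sequentially"
    using g gp by (subst uniform_limit_cong'[where g="\<lambda>N y. \<Prod>n<N. F n y" and h="\<lambda>y. pp p (\<alpha> * y) (\<beta> / y)" and i=g]) auto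
  have ev: "eventually (\<lambda>N. continuous_on (cball z r) (\<lambda>y. \<Prod>n<N. F n y) \<and> (\<lambda>y. \<Prod>n<N. F n y) holomorphic_on ball z r) sequentially"
  proof (intro always_eventually allI conjI)
    fix N
    show "continuous_on (cball z r) (\<lambda>y. \<Prod>n<N. F n y)" using cont by (intro continuous_intros) auto
    show "(\<lambda>y. \<Prod>n<N. F n y) holomorphic_on ball z r" unfolding F_def
      using nz by (intro holomorphic_intros) auto
  qed
  from holomorphic_uniform_limit[OF ev ul] show ?thesis by simp
qed

lemma holomorphic_on_ballsI:
  assumes "open S" "\<And>z. z \<in> S \<Longrightarrow> \<exists>r>0. f holomorphic_on ball z r"
  shows "f holomorphic_on S"
proof -
  have "\<exists>f'. DERIV f z :> f'" if zS: "z \<in> S" for z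
  proof -
    obtain r where r: "r > 0" "f holomorphic_on ball z r" using assms(2)[OF zS] by blast
    thus ?thesis using holomorphic_on_open[of "ball z r" f] by auto
  qed
  thus ?thesis using holomorphic_on_open[OF assms(1)] by blast
qed

lemma pp_holo:
  assumes "norm p < 1"
  shows "(\<lambda>y. pp p (\<alpha> * y) (\<beta> / y)) holomorphic_on - {0}"
proof (rule holomorphic_on_ballsI)
  fix z :: complex assume "z \<in> - {0}"
  hence "z \<noteq> 0" by simp
  thus "\<exists>r>0. (\<lambda>y. pp p (\<alpha> * y) (\<beta> / y)) holomorphic_on ball z r"
    using pp_holo_ball[OF assms, of z] by (intro exI[of _ "norm z / 2"]) auto
qed auto

lemma theta_holo:
  assumes "norm p < 1"
  shows "(\<lambda>y. theta y p) holomorphic_on - {0}"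
  unfolding theta_pp using pp_holo[OF assms, of 1 p] by simp

lemma theta_holo_compose [holomorphic_intros]:
  assumes "norm p < 1" "f holomorphic_on S" "\<And>z. z \<in> S \<Longrightarrow> f z \<noteq> 0"
  shows "(\<lambda>z. theta (f z) p) holomorphic_on S"
proof -
  have "(\<lambda>y. theta y p) \<circ> f holomorphic_on S"
    by (rule holomorphic_on_compose_gen[OF assms(2) theta_holo[OF assms(1)]]) (use assms(3) in auto)
  thus ?thesis by (simp add: o_def)
qed

lemma theta_cont_compose [continuous_intros]:
  assumes "norm p < 1" "continuous_on S f" "\<And>z. z \<in> S \<Longrightarrow> f z \<noteq> 0"
  shows "continuous_on S (\<lambda>z. theta (f z) p)"
proof -
  have "continuous_on (-{0}) (\<lambda>y. theta y p)" by (rule holomorphic_on_imp_continuous_on[OF theta_holo[OF assms(1)]])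
  hence "continuous_on S ((\<lambda>y. theta y p) \<circ> f)"
    by (rule continuous_on_compose[OF assms(2) continuous_on_subset]) (use assms(3) in auto)
  thus ?thesis by (simp add: o_def)
qed

lemma theta_tendsto [tendsto_intros]:
  assumes "norm p < 1" "(f \<longlongrightarrow> l) F" "l \<noteq> 0"
  shows "((\<lambda>x. theta (f x) p) \<longlongrightarrow> theta l p) F"
proof -
  have o: "open (-{0::complex})" by auto
  have "isCont (\<lambda>y. theta y p) l"
    using holomorphic_on_imp_continuous_on[OF theta_holo[OF assms(1)]] assms(3)
    unfolding continuous_on_eq_continuous_at[OF o] by auto
  thus ?thesis using isCont_tendsto_compose assms(2) by blast
qed

lemma T_isCont:
  assumes "norm p < 1"
  shows "isCont (\<lambda>y. pp p (p * y) (p / y)) 1"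
proof -
  have o: "open (-{0::complex})" by auto
  show ?thesis using holomorphic_on_imp_continuous_on[OF pp_holo[OF assms, of p p]]
    unfolding continuous_on_eq_continuous_at[OF o] by auto
qed



lemma periodic_powi:
  fixes p z :: complex
  assumes "p \<noteq> 0" "\<And>z. z \<noteq> 0 \<Longrightarrow> E (p * z) = E z" "z \<noteq> 0"
  shows "E (p powi k * z) = E z"
proof -
  have nat: "E (p ^ n * z) = E z" if zz: "z \<noteq> 0" for n z
  proof (induction n)
    case (Suc n)
    have "p ^ n * z \<noteq> 0" using zz assms(1) by simp
    hence "E (p * (p ^ n * z)) = E (p ^ n * z)" by (rule assms(2))
    thus ?case using Suc by (simp add: mult.assoc)
  qed simp
  show ?thesis
  proof (cases "k \<ge> 0")
    case True
    then obtain n where "k = int n" by (metis nonneg_eq_int)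
    thus ?thesis using nat[OF assms(3)] by (simp add: power_int_of_nat)
  next
    case False
    then obtain n where k: "k = - int n" by (metis nonneg_eq_int neg_0_le_iff_le minus_minus le_cases)
    have "z / p ^ n \<noteq> 0" using assms by simp
    hence "E (p ^ n * (z / p ^ n)) = E (z / p ^ n)" by (rule nat)
    moreover have "p ^ n * (z / p ^ n) = z" using assms(1) by simp
    moreover have "p powi k * z = z / p ^ n" unfolding k by (simp add: power_int_minus divide_inverse mult.commute)
    ultimately show ?thesis by simp
  qed
qed

lemma annulus_reduce:
  fixes p z :: complex
  assumes "norm p < 1" "p \<noteq> 0" "z \<noteq> 0"
  shows "\<exists>k::int. norm p \<le> norm (p powi k * z) \<and> norm (p powi k * z) \<le> 1"
proof -
  define L where "L = - ln (norm p)"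
  have L: "L > 0" using assms unfolding L_def by simp
  define k where "k = ceiling (ln (norm z) / L)"
  have k1: "ln (norm z) / L \<le> k" unfolding k_def by simp
  have k2: "k < ln (norm z) / L + 1" unfolding k_def by linarith
  have n: "norm (p powi k * z) = exp (ln (norm z) - of_int k * L)"
  proof -
    have "norm (p powi k) = norm p powr (of_int k)"
      using assms(2) by (simp add: norm_power_int powr_real_of_int')
    also have "\<dots> = exp (of_int k * ln (norm p))" using assms(2) by (simp add: powr_def)
    finally have "norm (p powi k) = exp (- (of_int k * L))" unfolding L_def by simp
    moreover have "norm z = exp (ln (norm z))" using assms(3) by simp
    ultimately have "norm (p powi k * z) = exp (- (of_int k * L)) * exp (ln (norm z))" by (simp add: norm_mult)
    thus ?thesis by (simp add: exp_add[symmetric])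
  qed
  have a: "ln (norm z) - of_int k * L \<le> 0" using k1 L by (simp add: divide_le_eq mult.commute)
  have b: "ln (norm z) - of_int k * L > - L" using k2 L by (simp add: less_divide_eq field_simps)
  have "norm (p powi k * z) \<le> 1" unfolding n using a by simp
  moreover have "norm (p powi k * z) \<ge> norm p"
  proof -
    have "norm p = exp (- L)" unfolding L_def using assms(2) by simp
    also have "\<dots> \<le> exp (ln (norm z) - of_int k * L)" using b by simp
    finally show ?thesis unfolding n .
  qed
  ultimately show ?thesis by blast
qed

lemma elliptic_const:
  assumes p: "norm p < 1" "p \<noteq> 0" and hol: "E holomorphic_on - {0}"
    and per: "\<And>z. z \<noteq> 0 \<Longrightarrow> E (p * z) = E z"
  shows "\<exists>C. \<forall>z. z \<noteq> 0 \<longrightarrow> E z = C"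
proof -
  define K where "K = {z::complex. norm p \<le> norm z \<and> norm z \<le> 1}"
  have "K = cball 0 1 - ball 0 (norm p)" unfolding K_def by auto
  hence cK: "compact K" by (simp add: compact_diff)
  have K0: "K \<subseteq> - {0}" unfolding K_def using p by auto
  have "continuous_on K E"
    using holomorphic_on_imp_continuous_on[OF hol] continuous_on_subset K0 by blast
  hence "compact (E ` K)" using cK compact_continuous_image by blast
  then obtain B where B: "\<And>z. z \<in> K \<Longrightarrow> norm (E z) \<le> B"
    using compact_imp_bounded bounded_iff by (metis imageI)
  have bnd: "norm (E z) \<le> B" if zne: "z \<noteq> 0" for z
  proof -
    obtain k :: int where "norm p \<le> norm (p powi k * z) \<and> norm (p powi k * z) \<le> 1"
      using annulus_reduce[OF p zne] by blast
    hence "p powi k * z \<in> K" unfolding K_def by simp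
    hence "norm (E (p powi k * z)) \<le> B" by (rule B)
    thus ?thesis using periodic_powi[of p E z k, OF p(2) per zne] by simp
  qed
  have h: "(\<lambda>w. E (exp w)) holomorphic_on UNIV"
    by (rule holomorphic_on_compose_gen[OF holomorphic_on_exp hol, unfolded o_def]) auto
  have "bounded (range (\<lambda>w. E (exp w)))"
    unfolding bounded_iff using bnd exp_not_eq_zero by blast
  from Liouville_theorem[OF h this] obtain C where C: "\<And>w. E (exp w) = C"
    unfolding constant_on_def by blast
  show ?thesis
  proof (intro exI allI impI)
    fix z :: complex assume "z \<noteq> 0"
    hence "exp (Ln z) = z" by simp
    thus "E z = C" using C by metis
  qed
qed



definition Vn :: "complex \<Rightarrow> nat \<Rightarrow> (complex \<Rightarrow> complex) \<Rightarrow> bool" where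
  "Vn p n G \<longleftrightarrow> G holomorphic_on - {0} \<and> (\<forall>w. w \<noteq> 0 \<longrightarrow> G (1 / w) = G w)
     \<and> (\<forall>w. w \<noteq> 0 \<longrightarrow> G (p * w) * (p * w ^ 2) ^ n = G w)"

definition tpair :: "complex \<Rightarrow> complex \<Rightarrow> complex \<Rightarrow> complex" where
  "tpair p x z = theta (x * z) p * theta (x / z) p"

lemma tpair_inv: "tpair p x (1 / z) = tpair p x z"
  unfolding tpair_def by (simp add: mult.commute)

lemma tpair_shift:
  assumes p: "norm p < 1" "p \<noteq> 0" and x: "x \<noteq> 0" and z: "z \<noteq> 0"
  shows "tpair p x (p * z) * (p * z ^ 2) = tpair p x z"
proof -
  have a: "theta (p * (x * z)) p = - theta (x * z) p / (x * z)"
    using theta_p_mult[OF p(2), of "x * z"] theta_inv[OF p(1), of "x * z"] x z by simp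
  have b0: "theta (p * (z / x)) p = theta (x / z) p"
    using theta_p_mult[OF p(2), of "z / x"] by simp
  have b: "theta (x / (p * z)) p = - theta (x / z) p * x / (p * z)"
  proof -
    have "x / (p * z) = 1 / ((p * z) / x)" by simp
    hence "theta (x / (p * z)) p = - theta ((p * z) / x) p / ((p * z) / x)"
      using theta_inv[OF p(1), of "(p * z) / x"] p x z by simp
    also have "theta ((p * z) / x) p = theta (x / z) p" using b0 by (simp add: mult_ac)
    finally show ?thesis using x by (simp add: field_simps)
  qed
  have c: "\<And>A B. (- A / (x * z)) * (- B * x / (p * z)) * (p * z ^ 2) = A * B"
    using x z p(2) by (simp add: field_simps power2_eq_square)
  have e: "x * (p * z) = p * (x * z)" by (simp add: mult_ac)
  have "tpair p x (p * z) = theta (p * (x * z)) p * theta (x / (p * z)) p"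
    unfolding tpair_def e ..
  also have "\<dots> = (- theta (x * z) p / (x * z)) * (- theta (x / z) p * x / (p * z))"
    unfolding a b ..
  finally have "tpair p x (p * z) = (- theta (x * z) p / (x * z)) * (- theta (x / z) p * x / (p * z))" .
  thus ?thesis using c unfolding tpair_def by simp
qed

lemma tpair_holo [holomorphic_intros]:
  assumes "norm p < 1" "x \<noteq> 0"
  shows "(\<lambda>z. tpair p x z) holomorphic_on - {0}"
  unfolding tpair_def using assms by (intro holomorphic_intros) auto

lemma tpair_tendsto [tendsto_intros]:
  assumes "norm p < 1" "x \<noteq> 0" "(f \<longlongrightarrow> l) F" "l \<noteq> 0"
  shows "((\<lambda>w. tpair p x (f w)) \<longlongrightarrow> tpair p x l) F"
  unfolding tpair_def using assms by (intro tendsto_intros) auto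


lemma Vn_prod_tpair:
  assumes p: "norm p < 1" "p \<noteq> 0" and fin: "finite I" and x: "\<And>i. i \<in> I \<Longrightarrow> x i \<noteq> 0"
  shows "Vn p (card I) (\<lambda>z. \<Prod>i\<in>I. tpair p (x i) z)"
  unfolding Vn_def
proof (intro conjI allI impI)
  show "(\<lambda>z. \<Prod>i\<in>I. tpair p (x i) z) holomorphic_on - {0}"
    using p x by (intro holomorphic_intros) auto
  fix w :: complex assume w: "w \<noteq> 0"
  show "(\<Prod>i\<in>I. tpair p (x i) (1 / w)) = (\<Prod>i\<in>I. tpair p (x i) w)" by (simp add: tpair_inv)
  have "(\<Prod>i\<in>I. tpair p (x i) (p * w)) * (p * w ^ 2) ^ card I = (\<Prod>i\<in>I. tpair p (x i) (p * w) * (p * w ^ 2))"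
    by (simp add: prod.distrib)
  also have "\<dots> = (\<Prod>i\<in>I. tpair p (x i) w)" using tpair_shift[OF p x w] by simp
  finally show "(\<Prod>i\<in>I. tpair p (x i) (p * w)) * (p * w ^ 2) ^ card I = (\<Prod>i\<in>I. tpair p (x i) w)" .
qed


lemma lim_transfer_powi:
  fixes \<Phi> :: "complex \<Rightarrow> complex" and p a c :: complex
  assumes p: "p \<noteq> 0" and per: "\<And>w. w \<noteq> 0 \<Longrightarrow> \<Phi> (p * w) = \<Phi> w" and a: "a \<noteq> 0"
    and lim: "\<Phi> \<midarrow>a\<rightarrow> c"
  shows "\<Phi> \<midarrow>(p powi k * a)\<rightarrow> c"
proof -
  define b where "b = p powi k * a"
  have b: "b \<noteq> 0" using p a unfolding b_def by simp
  have pk: "p powi (- k) * p powi k = 1" using p by (simp add: power_int_minus)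
  have gb: "p powi (- k) * b = a" unfolding b_def by (simp add: mult.assoc[symmetric] pk)
  have pk0: "p powi (- k) \<noteq> 0" using p by simp
  have g: "(\<lambda>w. p powi (- k) * w) \<midarrow>b\<rightarrow> a"
  proof -
    have "(\<lambda>w. p powi (- k) * w) \<midarrow>b\<rightarrow> p powi (- k) * b" by (intro tendsto_intros)
    thus ?thesis unfolding gb .
  qed
  have "(\<lambda>w. \<Phi> (p powi (- k) * w)) \<midarrow>b\<rightarrow> c"
  proof (rule LIM_compose2[OF g lim])
    show "\<exists>d>0. \<forall>w. w \<noteq> b \<and> norm (w - b) < d \<longrightarrow> p powi (- k) * w \<noteq> a"
    proof (intro exI[of _ 1] conjI allI impI)
      fix w assume "w \<noteq> b \<and> norm (w - b) < 1"
      hence "p powi (- k) * w \<noteq> p powi (- k) * b" using pk0 by simp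
      thus "p powi (- k) * w \<noteq> a" unfolding gb .
    qed simp
  qed
  moreover have "eventually (\<lambda>w. \<Phi> (p powi (- k) * w) = \<Phi> w) (at b)"
  proof -
    have "eventually (\<lambda>w. w \<noteq> 0) (at b)" by (rule eventually_neq_at_within)
    thus ?thesis
    proof eventually_elim
      case (elim w)
      show ?case by (rule periodic_powi[of p \<Phi> w "- k", OF p per elim])
    qed
  qed
  ultimately show ?thesis unfolding b_def[symmetric] by (rule Lim_transform_eventually)
qed

lemma lim_transfer_inv:
  fixes \<Phi> :: "complex \<Rightarrow> complex" and a c :: complex
  assumes sym: "\<And>w. w \<noteq> 0 \<Longrightarrow> \<Phi> (1 / w) = \<Phi> w" and a: "a \<noteq> 0"
    and lim: "\<Phi> \<midarrow>a\<rightarrow> c"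
  shows "\<Phi> \<midarrow>(1 / a)\<rightarrow> c"
proof -
  have g: "(\<lambda>w. 1 / w) \<midarrow>(1 / a)\<rightarrow> a"
  proof -
    have "(\<lambda>w. 1 / w) \<midarrow>(1 / a)\<rightarrow> 1 / (1 / a)" using a by (intro tendsto_intros) auto
    thus ?thesis by simp
  qed
  have "(\<lambda>w. \<Phi> (1 / w)) \<midarrow>(1 / a)\<rightarrow> c"
  proof (rule LIM_compose2[OF g lim])
    show "\<exists>d>0. \<forall>w. w \<noteq> 1 / a \<and> norm (w - 1 / a) < d \<longrightarrow> 1 / w \<noteq> a"
    proof (intro exI[of _ 1] conjI allI impI)
      fix w assume w: "w \<noteq> 1 / a \<and> norm (w - 1 / a) < 1"
      show "1 / w \<noteq> a"
      proof
        assume h: "1 / w = a"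
        have "w = 1 / a" by (subst h[symmetric]) simp
        thus False using w by simp
      qed
    qed simp
  qed
  moreover have "eventually (\<lambda>w. \<Phi> (1 / w) = \<Phi> w) (at (1 / a))"
  proof -
    have "eventually (\<lambda>w. w \<noteq> 0) (at (1 / a))" by (rule eventually_neq_at_within)
    thus ?thesis by eventually_elim (simp add: sym)
  qed
  ultimately show ?thesis by (rule Lim_transform_eventually)
qed



lemma isCont_holo:
  assumes "f holomorphic_on - {0}" "w \<noteq> 0"
  shows "isCont f w"
proof -
  have o: "open (-{0::complex})" by auto
  show ?thesis using holomorphic_on_imp_continuous_on[OF assms(1)] assms(2)
    unfolding continuous_on_eq_continuous_at[OF o] by auto
qed

lemma uniqueness:
  fixes x :: "nat \<Rightarrow> complex" and n :: nat and H :: "complex \<Rightarrow> complex"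
  assumes p: "norm p < 1" "p \<noteq> 0"
    and V: "Vn p n H"
    and zero: "\<forall>j\<le>n. H (x j) = 0"
    and xnz: "\<forall>j\<le>n. x j \<noteq> 0"
    and g1: "\<forall>i\<le>n. \<forall>j\<le>n. theta (x i * x j) p \<noteq> 0"
    and g2: "\<forall>i\<le>n. \<forall>j\<le>n. i \<noteq> j \<longrightarrow> theta (x i / x j) p \<noteq> 0"
    and z: "z \<noteq> 0" and Dz: "(\<Prod>j\<in>{1..n}. tpair p (x j) z) \<noteq> 0"
  shows "H z = 0"
proof -
  define D where "D w = (\<Prod>j\<in>{1..n}. tpair p (x j) w)" for w
  define \<Phi> where "\<Phi> w = H w / D w" for w
  have VD: "Vn p n D"
    using Vn_prod_tpair[OF p, of "{1..n}" x] xnz unfolding D_def by auto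
  have Hhol: "H holomorphic_on - {0}" and Hsym: "\<And>w. w \<noteq> 0 \<Longrightarrow> H (1 / w) = H w"
    and Hper: "\<And>w. w \<noteq> 0 \<Longrightarrow> H (p * w) * (p * w ^ 2) ^ n = H w"
    using V unfolding Vn_def by auto
  have Dhol: "D holomorphic_on - {0}" and Dsym: "\<And>w. w \<noteq> 0 \<Longrightarrow> D (1 / w) = D w"
    and Dper: "\<And>w. w \<noteq> 0 \<Longrightarrow> D (p * w) * (p * w ^ 2) ^ n = D w"
    using VD unfolding Vn_def by auto
  have per: "\<Phi> (p * w) = \<Phi> w" if w: "w \<noteq> 0" for w
  proof -
    define c where "c = (p * w ^ 2) ^ n"
    have c: "c \<noteq> 0" unfolding c_def using w p by simp
    have "H (p * w) = H w / c" using Hper[OF w] c unfolding c_def[symmetric] by (simp add: field_simps)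
    moreover have "D (p * w) = D w / c" using Dper[OF w] c unfolding c_def[symmetric] by (simp add: field_simps)
    ultimately show ?thesis unfolding \<Phi>_def using c by simp
  qed
  have sym: "\<Phi> (1 / w) = \<Phi> w" if w: "w \<noteq> 0" for w
    unfolding \<Phi>_def using Hsym[OF w] Dsym[OF w] by simp
  have cont: "\<Phi> \<midarrow>w\<rightarrow> \<Phi> w" if w: "w \<noteq> 0" "D w \<noteq> 0" for w
  proof -
    have "isCont H w" "isCont D w" using isCont_holo[OF Hhol w(1)] isCont_holo[OF Dhol w(1)] by auto
    hence "(\<lambda>v. H v / D v) \<midarrow>w\<rightarrow> H w / D w" using w(2) by (intro tendsto_intros) (auto simp: isCont_def)
    thus ?thesis unfolding \<Phi>_def .
  qed
  have core: "\<exists>c. \<Phi> \<midarrow>(1 / x j)\<rightarrow> c" if j: "j \<in> {1..n}" for j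
  proof -
    define X where "X = x j"
    have X: "X \<noteq> 0" using xnz j unfolding X_def by auto
    define z0 where "z0 = 1 / X"
    have z0: "z0 \<noteq> 0" using X unfolding z0_def by simp
    define R where "R w = (\<Prod>i\<in>{1..n} - {j}. tpair p (x i) w)" for w
    define T where "T y = pp p (p * y) (p / y)" for y
    have Dsplit: "D w = tpair p X w * R w" for w
      unfolding D_def R_def X_def using j by (simp add: prod.remove)
    have Hz0: "H z0 = 0"
    proof -
      have "H z0 = H X" unfolding z0_def using Hsym[OF X] .
      thus ?thesis using zero j unfolding X_def by auto
    qed
    obtain H' where H': "(H has_field_derivative H') (at z0)"
      using Hhol z0 holomorphic_on_open[of "- {0}" H] by auto
    have DQ: "((\<lambda>w. (H w - H z0) / (w - z0)) \<longlongrightarrow> H') (at z0)"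
      using H' unfolding has_field_derivative_iff .
    define Q where "Q w = - X * T (X * w) * theta (X / w) p * R w" for w
    have Xz0: "X * z0 = 1" unfolding z0_def using X by simp
    have XX: "X / z0 = X * X" unfolding z0_def by simp
    have TQ: "((\<lambda>w. T (X * w)) \<longlongrightarrow> T 1) (at z0)"
    proof -
      have "((\<lambda>w. X * w) \<longlongrightarrow> X * z0) (at z0)" by (intro tendsto_intros)
      hence "((\<lambda>w. X * w) \<longlongrightarrow> 1) (at z0)" unfolding Xz0 .
      thus ?thesis using T_isCont[OF p(1)] unfolding T_def by (rule isCont_tendsto_compose[rotated])
    qed
    have thQ: "((\<lambda>w. theta (X / w) p) \<longlongrightarrow> theta (X * X) p) (at z0)"
    proof -
      have "((\<lambda>w. theta (X / w) p) \<longlongrightarrow> theta (X / z0) p) (at z0)"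
        using X z0 by (intro tendsto_intros p) auto
      thus ?thesis unfolding XX .
    qed
    have RQ: "(R \<longlongrightarrow> R z0) (at z0)"
      unfolding R_def using xnz z0 by (intro tendsto_intros p) auto
    have QL: "(Q \<longlongrightarrow> - X * T 1 * theta (X * X) p * R z0) (at z0)"
      unfolding Q_def by (intro tendsto_intros TQ thQ RQ)
    have QNZ: "- X * T 1 * theta (X * X) p * R z0 \<noteq> 0"
    proof -
      have "T 1 \<noteq> 0" unfolding T_def using T1_nonzero[OF p(1)] by simp
      moreover have "theta (X * X) p \<noteq> 0" using g1 j unfolding X_def by auto
      moreover have "R z0 \<noteq> 0"
      proof -
        have "tpair p (x i) z0 \<noteq> 0" if i: "i \<in> {1..n} - {j}" for i
        proof -
          have a: "x i * z0 = x i / x j" unfolding z0_def X_def by simp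
          have b: "x i / z0 = x i * x j" unfolding z0_def X_def by simp
          show ?thesis unfolding tpair_def a b using g1 g2 i j by auto
        qed
        thus ?thesis unfolding R_def by simp
      qed
      ultimately show ?thesis using X by simp
    qed
    have ev: "eventually (\<lambda>w. \<Phi> w = ((H w - H z0) / (w - z0)) / Q w) (at z0)"
    proof -
      have "eventually (\<lambda>w. w \<noteq> 0) (at z0)" by (rule eventually_neq_at_within)
      moreover have "eventually (\<lambda>w. w \<noteq> z0) (at z0)" by (rule eventually_neq_at_within)
      ultimately show ?thesis
      proof eventually_elim
        case (elim w)
        have tp: "tpair p X w = (1 - X * w) * T (X * w) * theta (X / w) p"
          unfolding tpair_def T_def using theta_T[OF p(1), of "X * w"] by simp
        have lin: "1 - X * w = (w - z0) * (- X)" unfolding z0_def using X by (simp add: field_simps)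
        have "D w = (w - z0) * Q w" unfolding Dsplit tp lin Q_def by (simp add: mult_ac)
        hence "\<Phi> w = (H w - H z0) / ((w - z0) * Q w)" unfolding \<Phi>_def Hz0 by simp
        thus ?case by (simp add: divide_divide_eq_left mult.commute)
      qed
    qed
    have "((\<lambda>w. ((H w - H z0) / (w - z0)) / Q w) \<longlongrightarrow> H' / (- X * T 1 * theta (X * X) p * R z0)) (at z0)"
      by (intro tendsto_divide DQ QL QNZ)
    hence "\<Phi> \<midarrow>z0\<rightarrow> H' / (- X * T 1 * theta (X * X) p * R z0)"
      using ev by (rule Lim_transform_eventually[OF _ eventually_mono]) auto
    thus ?thesis unfolding z0_def X_def by blast
  qed
  have alllim: "\<exists>c. \<Phi> \<midarrow>w\<rightarrow> c" if w: "w \<noteq> 0" for w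
  proof (cases "D w = 0")
    case False
    thus ?thesis using cont[OF w] by blast
  next
    case True
    then obtain j where j: "j \<in> {1..n}" and tz: "tpair p (x j) w = 0"
      unfolding D_def by (auto simp: prod_zero_iff)
    have xj: "x j \<noteq> 0" using xnz j by auto
    have ia: "1 / x j \<noteq> 0" using xj by simp
    obtain c where c: "\<Phi> \<midarrow>(1 / x j)\<rightarrow> c" using core[OF j] by blast
    have liftk: "\<Phi> \<midarrow>(p powi k * (1 / x j))\<rightarrow> c" for k
      by (rule lim_transfer_powi[OF p(2) per ia c])
    show ?thesis
    proof (cases "theta (x j * w) p = 0")
      case True
      then obtain k where "x j * w = p powi k" using theta_zero[OF p, of "x j * w"] xj w by auto
      hence "p powi k * (1 / x j) = (x j * w) / x j" by simp
      also have "\<dots> = w" using xj by simp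
      finally have "w = p powi k * (1 / x j)" by simp
      thus ?thesis using liftk by blast
    next
      case False
      hence "theta (x j / w) p = 0" using tz unfolding tpair_def by simp
      then obtain k where k: "x j / w = p powi k" using theta_zero[OF p, of "x j / w"] xj w by auto
      have a0: "p powi k * (1 / x j) \<noteq> 0" using p xj by simp
      have "p powi k * (1 / x j) = (x j / w) / x j" using k by simp
      also have "\<dots> = 1 / w" using xj by simp
      finally have "w = 1 / (p powi k * (1 / x j))" by simp
      thus ?thesis using lim_transfer_inv[OF sym a0 liftk] by blast
    qed
  qed
  define E where "E = remove_sings \<Phi>"
  have o: "open (-{0::complex})" by auto
  have mero: "\<Phi> meromorphic_on - {0}"
  proof -
    have "H analytic_on - {0}" "D analytic_on - {0}" using Hhol Dhol o by (auto simp: analytic_on_open)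
    hence "H meromorphic_on - {0}" "D meromorphic_on - {0}" by (auto intro: analytic_on_imp_meromorphic_on)
    hence "(\<lambda>w. H w / D w) meromorphic_on - {0}" by (rule meromorphic_on_divide)
    thus ?thesis unfolding \<Phi>_def .
  qed
  have Ean1: "E analytic_on {w}" if w: "w \<noteq> 0" for w
  proof -
    have sub: "{w} \<subseteq> - {0}" using w by auto
    have "\<Phi> meromorphic_on {w}" by (rule meromorphic_on_subset[OF mero sub])
    hence iso: "isolated_singularity_at \<Phi> w" by (rule meromorphic_on_isolated_singularity)
    obtain c where c: "\<Phi> \<midarrow>w\<rightarrow> c" using alllim[OF w] by blast
    show ?thesis unfolding E_def by (rule remove_sings_analytic_at[OF iso c])
  qed
  have Ean: "E analytic_on - {0}"
    using Ean1 analytic_on_analytic_at[of E "- {0}"] by blast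
  have Ehol: "E holomorphic_on - {0}" using Ean by (rule analytic_imp_holomorphic)
  have Eper: "E (p * w) = E w" if w: "w \<noteq> 0" for w
  proof -
    obtain c where c: "\<Phi> \<midarrow>w\<rightarrow> c" using alllim[OF w] by blast
    have "\<Phi> \<midarrow>(p powi 1 * w)\<rightarrow> c" by (rule lim_transfer_powi[OF p(2) per w c])
    hence "E (p * w) = c" unfolding E_def by (intro remove_sings_eqI) simp
    moreover have "E w = c" unfolding E_def using c by (rule remove_sings_eqI)
    ultimately show ?thesis by simp
  qed
  obtain C where C: "\<And>w. w \<noteq> 0 \<Longrightarrow> E w = C" using elliptic_const[OF p Ehol Eper] by blast
  have x0: "x 0 \<noteq> 0" using xnz by auto
  have Dx0: "D (x 0) \<noteq> 0"
  proof -
    have "tpair p (x j) (x 0) \<noteq> 0" if j: "j \<in> {1..n}" for j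
      unfolding tpair_def using g1 g2 j by auto
    thus ?thesis unfolding D_def by simp
  qed
  have "E (x 0) = \<Phi> (x 0)" unfolding E_def using cont[OF x0 Dx0] by (rule remove_sings_eqI)
  also have "\<Phi> (x 0) = 0" unfolding \<Phi>_def using zero by simp
  finally have C0: "C = 0" using C[OF x0] by simp
  have Dz': "D z \<noteq> 0" using Dz unfolding D_def .
  have "E z = \<Phi> z" unfolding E_def using cont[OF z Dz'] by (rule remove_sings_eqI)
  hence "\<Phi> z = 0" using C[OF z] C0 by simp
  thus ?thesis unfolding \<Phi>_def using Dz' by simp
qed



lemma tpoch_split2: "tpoch x q p (k + l) = tpoch x q p k * tpoch (x * q ^ k) q p l"
  unfolding tpoch_def
proof (induction l)
  case 0 then show ?case by simp
next
  case (Suc l)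
  show ?case by (simp add: Suc power_add mult_ac)
qed

lemma theta_refl:
  assumes "norm p < 1" "X * Y = 1"
  shows "theta X p = - theta Y p / Y"
proof -
  have Y: "Y \<noteq> 0" using assms(2) by auto
  have "X = 1 / Y" using assms(2) Y by (simp add: field_simps)
  thus ?thesis using theta_inv[OF assms(1) Y] by simp
qed

lemma scal_aux:
  fixes q A3 A4 B3 B4 t3 t4 s3 s4 :: complex
  assumes "A3 * A4 = q * (B3 * B4)" "B3 \<noteq> 0" "B4 \<noteq> 0" "q \<noteq> 0"
  shows "(- t3 / B3) * (- t4 / B4) * s3 * s4 = q * (- s3 / A3) * t3 * t4 * (- s4 / A4)"
proof -
  have A3: "A3 \<noteq> 0" and A4: "A4 \<noteq> 0" using assms by auto
  have "q * (- s3 / A3) * t3 * t4 * (- s4 / A4) = (q * s3 * t3 * t4 * s4) / (A3 * A4)"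
    by (simp add: field_simps)
  also have "\<dots> = (q * s3 * t3 * t4 * s4) / (q * (B3 * B4))" unfolding assms(1) ..
  also have "\<dots> = (- t3 / B3) * (- t4 / B4) * s3 * s4" using assms(2-4) by (simp add: field_simps)
  finally show ?thesis ..
qed

lemma TW:
  fixes a c q p :: complex
  assumes p: "norm p < 1" and q: "q \<noteq> 0" and a: "a \<noteq> 0" and c: "c \<noteq> 0"
    and j: "j = Suc (i + d)" and n: "n = j + e"
  shows "theta (c / (a * q ^ j) * q ^ d) p * theta (a * q powi (1 - int n) / c * q ^ i) p
           * theta (q * q ^ e * q ^ d) p * theta (q * q ^ i) p
       = q * theta (q powi (- int n) * q ^ i) p * theta (a * q / c * q ^ i) p
           * theta (c / a * q ^ e * q ^ d) p * theta (a * q ^ d / (a * q ^ j)) p"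
proof -
  define A3 where "A3 = q * q ^ e * q ^ d"
  define A4 where "A4 = q * q ^ i"
  define B3 where "B3 = a * q / c * q ^ i"
  define B4 where "B4 = c / a * q ^ e * q ^ d"
  have pn: "q powi (1 - int n) = inverse (q ^ (i + d + e))"
  proof -
    have e: "1 - int n = - int (i + d + e)" using j n by simp
    have "q powi (1 - int n) = q powi (- int (i + d + e))" by (simp only: e)
    thus ?thesis by (metis power_int_minus power_int_of_nat)
  qed
  have pn2: "q powi (- int n) = inverse (q ^ n)" by (simp add: power_int_minus)
  have r1: "c / (a * q ^ j) * q ^ d * B3 = 1"
    unfolding B3_def j using a c q by (simp add: field_simps power_add)
  have r2: "a * q powi (1 - int n) / c * q ^ i * B4 = 1"
    unfolding B4_def pn using a c q by (simp add: field_simps power_add)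
  have r3: "q powi (- int n) * q ^ i * A3 = 1"
    unfolding A3_def pn2 unfolding n j using q by (simp add: field_simps power_add)
  have r4: "a * q ^ d / (a * q ^ j) * A4 = 1"
    unfolding A4_def j using a q by (simp add: field_simps power_add)
  have sc: "A3 * A4 = q * (B3 * B4)"
    unfolding A3_def A4_def B3_def B4_def using a c q by (simp add: field_simps power_add)
  have B3: "B3 \<noteq> 0" and B4: "B4 \<noteq> 0" unfolding B3_def B4_def using a c q by auto
  show ?thesis
    unfolding theta_refl[OF p r1] theta_refl[OF p r2] theta_refl[OF p r3] theta_refl[OF p r4]
    unfolding A3_def[symmetric] A4_def[symmetric] B3_def[symmetric] B4_def[symmetric]
    by (rule scal_aux[OF sc B3 B4 q])
qed

lemma prod_rev_lt: "(\<Prod>i<j. f i) = (\<Prod>i<j. f (j - Suc i))"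
  using prod.atLeastLessThan_rev[of f 0 j] by (simp add: lessThan_atLeast0)

lemma S3p:
  fixes a c q p :: complex
  assumes p: "norm p < 1" and q: "q \<noteq> 0" and a: "a \<noteq> 0" and c: "c \<noteq> 0" and jn: "j \<le> n"
  shows "tpoch (c / (a * q ^ j)) q p j * tpoch (a * q powi (1 - int n) / c) q p j * tpoch (q * q ^ (n - j)) q p j * tpoch q q p j
       = q ^ j * tpoch (q powi (- int n)) q p j * tpoch (a * q / c) q p j * tpoch (c / a * q ^ (n - j)) q p j
         * (\<Prod>i<j. theta (a * q ^ i / (a * q ^ j)) p)"
proof -
  have L1: "tpoch (c / (a * q ^ j)) q p j = (\<Prod>i<j. theta (c / (a * q ^ j) * q ^ (j - Suc i)) p)"
    unfolding tpoch_def by (rule prod_rev_lt)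
  have L3: "tpoch (q * q ^ (n - j)) q p j = (\<Prod>i<j. theta (q * q ^ (n - j) * q ^ (j - Suc i)) p)"
    unfolding tpoch_def by (rule prod_rev_lt)
  have R4: "(\<Prod>i<j. theta (c / a * q ^ (n - j) * q ^ i) p) = (\<Prod>i<j. theta (c / a * q ^ (n - j) * q ^ (j - Suc i)) p)"
    by (rule prod_rev_lt)
  have R5: "(\<Prod>i<j. theta (a * q ^ i / (a * q ^ j)) p) = (\<Prod>i<j. theta (a * q ^ (j - Suc i) / (a * q ^ j)) p)"
    by (rule prod_rev_lt)
  have "tpoch (c / (a * q ^ j)) q p j * tpoch (a * q powi (1 - int n) / c) q p j * tpoch (q * q ^ (n - j)) q p j * tpoch q q p j
     = (\<Prod>i<j. theta (c / (a * q ^ j) * q ^ (j - Suc i)) p * theta (a * q powi (1 - int n) / c * q ^ i) p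
           * theta (q * q ^ (n - j) * q ^ (j - Suc i)) p * theta (q * q ^ i) p)"
    unfolding L1 L3 unfolding tpoch_def prod.distrib ..
  also have "\<dots> = (\<Prod>i<j. q * theta (q powi (- int n) * q ^ i) p * theta (a * q / c * q ^ i) p
           * theta (c / a * q ^ (n - j) * q ^ (j - Suc i)) p * theta (a * q ^ (j - Suc i) / (a * q ^ j)) p)"
  proof (rule prod.cong[OF refl])
    fix i assume "i \<in> {..<j}"
    hence j: "j = Suc (i + (j - Suc i))" by simp
    have n: "n = j + (n - j)" using jn by simp
    show "theta (c / (a * q ^ j) * q ^ (j - Suc i)) p * theta (a * q powi (1 - int n) / c * q ^ i) p
           * theta (q * q ^ (n - j) * q ^ (j - Suc i)) p * theta (q * q ^ i) p
        = q * theta (q powi (- int n) * q ^ i) p * theta (a * q / c * q ^ i) p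
           * theta (c / a * q ^ (n - j) * q ^ (j - Suc i)) p * theta (a * q ^ (j - Suc i) / (a * q ^ j)) p"
      by (rule TW[OF p q a c j n])
  qed
  also have "\<dots> = q ^ j * tpoch (q powi (- int n)) q p j * tpoch (a * q / c) q p j * tpoch (c / a * q ^ (n - j)) q p j
         * (\<Prod>i<j. theta (a * q ^ i / (a * q ^ j)) p)"
    by (simp only: prod.distrib tpoch_def R4 R5 prod_constant card_lessThan)
  finally show ?thesis .
qed

lemma S2:
  "tpoch (c * (a * q ^ j)) q p n * tpoch (a * c) q p j = tpoch (a * c * q ^ n) q p j * tpoch (a * c) q p n"
proof -
  have "tpoch (a * c) q p (j + n) = tpoch (a * c) q p j * tpoch (a * c * q ^ j) q p n" by (rule tpoch_split2)
  moreover have "tpoch (a * c) q p (n + j) = tpoch (a * c) q p n * tpoch (a * c * q ^ n) q p j" by (rule tpoch_split2)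
  moreover have e: "c * (a * q ^ j) = a * c * q ^ j" by (simp add: mult_ac)
  moreover have "j + n = n + j" by simp
  ultimately show ?thesis by (metis mult.commute)
qed

lemma S1:
  fixes a q p :: complex assumes jn: "j \<le> n"
  shows "theta (a ^ 2) p * tpoch (a ^ 2 * q) q p n * tpoch (a ^ 2 * q ^ (n + 1)) q p j
       = theta (a ^ 2 * q ^ (2 * j)) p * tpoch (a ^ 2) q p j * (\<Prod>i\<in>{0..n} - {j}. theta (a * q ^ i * (a * q ^ j)) p)"
proof -
  have "tpoch (a ^ 2) q p (1 + n) = tpoch (a ^ 2) q p 1 * tpoch (a ^ 2 * q ^ 1) q p n" by (rule tpoch_split2)
  hence e1: "tpoch (a ^ 2) q p (Suc n) = theta (a ^ 2) p * tpoch (a ^ 2 * q) q p n" by (simp add: tpoch_def)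
  have e2: "tpoch (a ^ 2) q p (Suc n + j) = tpoch (a ^ 2) q p (Suc n) * tpoch (a ^ 2 * q ^ (n + 1)) q p j"
    using tpoch_split2[of "a ^ 2" q p "Suc n" j] by simp
  have e3: "tpoch (a ^ 2) q p (j + Suc n) = tpoch (a ^ 2) q p j * tpoch (a ^ 2 * q ^ j) q p (Suc n)"
    by (rule tpoch_split2)
  have e4: "theta (a ^ 2 * q ^ (2 * j)) p * (\<Prod>i\<in>{0..n} - {j}. theta (a * q ^ i * (a * q ^ j)) p)
      = (\<Prod>i\<in>{0..n}. theta (a * q ^ i * (a * q ^ j)) p)"
  proof -
    have "(\<Prod>i\<in>{0..n}. theta (a * q ^ i * (a * q ^ j)) p) = theta (a * q ^ j * (a * q ^ j)) p * (\<Prod>i\<in>{0..n} - {j}. theta (a * q ^ i * (a * q ^ j)) p)"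
      by (rule prod.remove) (use jn in auto)
    moreover have "a * q ^ j * (a * q ^ j) = a ^ 2 * q ^ (2 * j)" by (simp add: power2_eq_square power_mult mult_ac)
    ultimately show ?thesis by simp
  qed
  have e5: "(\<Prod>i\<in>{0..n}. theta (a * q ^ i * (a * q ^ j)) p) = tpoch (a ^ 2 * q ^ j) q p (Suc n)"
  proof -
    have U: "{0..n} = {..<Suc n}" by auto
    have eqi: "\<And>i. a * q ^ i * (a * q ^ j) = a ^ 2 * q ^ j * q ^ i" by (simp add: power2_eq_square mult_ac)
    show ?thesis unfolding tpoch_def U by (rule prod.cong[OF refl], simp only: eqi)
  qed
  have "theta (a ^ 2) p * tpoch (a ^ 2 * q) q p n * tpoch (a ^ 2 * q ^ (n + 1)) q p j = tpoch (a ^ 2) q p (Suc n + j)"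
    unfolding e2 e1 ..
  also have "\<dots> = tpoch (a ^ 2) q p (j + Suc n)" by (simp add: add.commute)
  also have "\<dots> = theta (a ^ 2 * q ^ (2 * j)) p * tpoch (a ^ 2) q p j * (\<Prod>i\<in>{0..n} - {j}. theta (a * q ^ i * (a * q ^ j)) p)"
    unfolding e3 e5[symmetric] e4[symmetric] by (simp add: mult_ac)
  finally show ?thesis .
qed

lemma S3:
  fixes a c q p :: complex
  assumes p: "norm p < 1" and q: "q \<noteq> 0" and a: "a \<noteq> 0" and c: "c \<noteq> 0" and jn: "j \<le> n"
  shows "tpoch (c / (a * q ^ j)) q p n * tpoch (a * q powi (1 - int n) / c) q p j * tpoch q q p n * tpoch q q p j
       = q ^ j * tpoch (q powi (- int n)) q p j * tpoch (a * q / c) q p j * tpoch (c / a) q p n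
         * (\<Prod>i\<in>{0..n} - {j}. theta (a * q ^ i / (a * q ^ j)) p)"
proof -
  define m where "m = n - j"
  have nm: "n = j + m" "n = m + j" unfolding m_def using jn by auto
  have e1: "tpoch (c / (a * q ^ j)) q p n = tpoch (c / (a * q ^ j)) q p j * tpoch (c / a) q p m"
  proof -
    have "tpoch (c / (a * q ^ j)) q p (j + m) = tpoch (c / (a * q ^ j)) q p j * tpoch (c / (a * q ^ j) * q ^ j) q p m"
      by (rule tpoch_split2)
    moreover have "c / (a * q ^ j) * q ^ j = c / a" using q by simp
    ultimately show ?thesis using nm(1) by simp
  qed
  have e2: "tpoch q q p n = tpoch q q p m * tpoch (q * q ^ m) q p j"
    using tpoch_split2[of q q p m j] nm by simp
  have e3: "tpoch (c / a) q p n = tpoch (c / a) q p m * tpoch (c / a * q ^ m) q p j"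
    using tpoch_split2[of "c / a" q p m j] nm by simp
  have e4: "(\<Prod>i\<in>{0..n} - {j}. theta (a * q ^ i / (a * q ^ j)) p)
      = (\<Prod>i<j. theta (a * q ^ i / (a * q ^ j)) p) * tpoch q q p m"
  proof -
    have U: "{0..n} - {j} = {..<j} \<union> {Suc j..n}" using jn by auto
    have "(\<Prod>i\<in>{0..n} - {j}. theta (a * q ^ i / (a * q ^ j)) p)
        = (\<Prod>i<j. theta (a * q ^ i / (a * q ^ j)) p) * (\<Prod>i\<in>{Suc j..n}. theta (a * q ^ i / (a * q ^ j)) p)"
      unfolding U by (rule prod.union_disjoint) auto
    moreover have "(\<Prod>i\<in>{Suc j..n}. theta (a * q ^ i / (a * q ^ j)) p) = tpoch q q p m"
    proof -
      have im: "{Suc j..n} = (\<lambda>l. Suc (j + l)) ` {..<m}"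
      proof
        show "{Suc j..n} \<subseteq> (\<lambda>l. Suc (j + l)) ` {..<m}"
        proof
          fix x assume x: "x \<in> {Suc j..n}"
          hence "x = Suc (j + (x - Suc j))" "x - Suc j \<in> {..<m}" unfolding m_def by auto
          thus "x \<in> (\<lambda>l. Suc (j + l)) ` {..<m}" by (rule image_eqI)
        qed
        show "(\<lambda>l. Suc (j + l)) ` {..<m} \<subseteq> {Suc j..n}" unfolding m_def by auto
      qed
      have inj: "inj_on (\<lambda>l. Suc (j + l)) {..<m}" by (auto simp: inj_on_def)
      have "(\<Prod>i\<in>{Suc j..n}. theta (a * q ^ i / (a * q ^ j)) p) = (\<Prod>l<m. theta (a * q ^ Suc (j + l) / (a * q ^ j)) p)"
        unfolding im prod.reindex[OF inj] o_def ..
      also have "\<dots> = (\<Prod>l<m. theta (q * q ^ l) p)"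
      proof (rule prod.cong[OF refl])
        fix l
        have "a * q ^ Suc (j + l) / (a * q ^ j) = q * q ^ l" using a q by (simp add: power_add field_simps)
        thus "theta (a * q ^ Suc (j + l) / (a * q ^ j)) p = theta (q * q ^ l) p" by simp
      qed
      finally show ?thesis unfolding tpoch_def .
    qed
    ultimately show ?thesis by simp
  qed
  have S: "tpoch (c / (a * q ^ j)) q p j * tpoch (a * q powi (1 - int n) / c) q p j * tpoch (q * q ^ m) q p j * tpoch q q p j
       = q ^ j * tpoch (q powi (- int n)) q p j * tpoch (a * q / c) q p j * tpoch (c / a * q ^ m) q p j
         * (\<Prod>i<j. theta (a * q ^ i / (a * q ^ j)) p)"
    using S3p[OF p q a c jn] unfolding m_def .
  show ?thesis
    unfolding e1 e2 e3 e4
    using S by (simp add: mult_ac)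
qed

lemma algebra_X:
  fixes t0 tj Qm A2j AQC ACQn Qj A2Q ACj AQN A2n Qn ACn CAn Dc1 Dc2 BA BQ qj :: complex
  assumes S1: "t0 * A2n * A2Q = tj * A2j * BA"
    and S2: "Dc1 * ACj = ACQn * ACn"
    and S3: "Dc2 * AQN * Qn * Qj = qj * Qm * AQC * CAn * BQ"
  shows "qj * tj * (Qm * A2j * AQC * ACQn) * (BA * BQ) * (ACn * CAn) = t0 * (Qj * A2Q * ACj * AQN) * (A2n * Qn) * (Dc1 * Dc2)"
proof -
  have "t0 * (Qj * A2Q * ACj * AQN) * (A2n * Qn) * (Dc1 * Dc2) = (t0 * A2n * A2Q) * (Dc1 * ACj) * (Dc2 * AQN * Qn * Qj)"
    by (simp add: mult_ac)
  also have "\<dots> = (tj * A2j * BA) * (ACQn * ACn) * (qj * Qm * AQC * CAn * BQ)" unfolding S1 S2 S3 ..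
  also have "\<dots> = qj * tj * (Qm * A2j * AQC * ACQn) * (BA * BQ) * (ACn * CAn)" by (simp add: mult_ac)
  finally show ?thesis ..
qed

lemma div_X:
  fixes qj tj t0 N1 D1 Bj AC M Dc :: complex
  assumes "t0 \<noteq> 0" "D1 \<noteq> 0" "AC \<noteq> 0" "qj * tj * N1 * Bj * AC = t0 * D1 * M * Dc"
  shows "qj * tj / t0 * N1 / D1 * Bj = M / AC * Dc"
proof -
  have "qj * tj / t0 * N1 / D1 * Bj = (qj * tj * N1 * Bj * AC) / (t0 * D1 * AC)" using assms(3) by (simp add: field_simps)
  also have "\<dots> = (t0 * D1 * M * Dc) / (t0 * D1 * AC)" unfolding assms(4) ..
  also have "\<dots> = M / AC * Dc" using assms(1,2) by (simp add: field_simps)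
  finally show ?thesis .
qed

lemma node_id2:
  fixes a c q p :: complex
  assumes p: "norm p < 1" "p \<noteq> 0" and q: "q \<noteq> 0" and a: "a \<noteq> 0" and c: "c \<noteq> 0" and j: "j \<le> n"
    and nz: "theta (a ^ 2) p \<noteq> 0" "tpoch (a * c) q p n \<noteq> 0" "tpoch (c / a) q p n \<noteq> 0"
      "tpoch q q p j \<noteq> 0" "tpoch (a ^ 2 * q ^ (n + 1)) q p j \<noteq> 0" "tpoch (a * c) q p j \<noteq> 0"
      "tpoch (a * q powi (1 - int n) / c) q p j \<noteq> 0"
  shows "(q ^ j * theta (a ^ 2 * q ^ (2 * j)) p / theta (a ^ 2) p * (tpoch (q powi (- int n)) q p j * tpoch (a ^ 2) q p j * tpoch (a * q / c) q p j * tpoch (a * c * q ^ n) q p j) / (tpoch q q p j * tpoch (a ^ 2 * q ^ (n + 1)) q p j * tpoch (a * c) q p j * tpoch (a * q powi (1 - int n) / c) q p j)) * (\<Prod>i\<in>{0..n} - {j}. tpair p (a * q ^ i) (a * q ^ j))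
       = tpoch (a ^ 2 * q) q p n * tpoch q q p n / (tpoch (a * c) q p n * tpoch (c / a) q p n)
         * (tpoch (c * (a * q ^ j)) q p n * tpoch (c / (a * q ^ j)) q p n)"
proof -
  have Bj: "(\<Prod>i\<in>{0..n} - {j}. tpair p (a * q ^ i) (a * q ^ j))
      = (\<Prod>i\<in>{0..n} - {j}. theta (a * q ^ i * (a * q ^ j)) p) * (\<Prod>i\<in>{0..n} - {j}. theta (a * q ^ i / (a * q ^ j)) p)"
    unfolding tpair_def by (rule prod.distrib)
  have X: "q ^ j * theta (a ^ 2 * q ^ (2 * j)) p * (tpoch (q powi (- int n)) q p j * tpoch (a ^ 2) q p j * tpoch (a * q / c) q p j * tpoch (a * c * q ^ n) q p j)
      * ((\<Prod>i\<in>{0..n} - {j}. theta (a * q ^ i * (a * q ^ j)) p) * (\<Prod>i\<in>{0..n} - {j}. theta (a * q ^ i / (a * q ^ j)) p))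
      * (tpoch (a * c) q p n * tpoch (c / a) q p n)
    = theta (a ^ 2) p * (tpoch q q p j * tpoch (a ^ 2 * q ^ (n + 1)) q p j * tpoch (a * c) q p j * tpoch (a * q powi (1 - int n) / c) q p j)
      * (tpoch (a ^ 2 * q) q p n * tpoch q q p n) * (tpoch (c * (a * q ^ j)) q p n * tpoch (c / (a * q ^ j)) q p n)"
    by (rule algebra_X[OF S1[OF j] S2 S3[OF p(1) q a c j]])
  show ?thesis unfolding Bj
    by (rule div_X[OF nz(1) _ _ X]) (use nz in auto)
qed



lemma Vn_add: "Vn p n F \<Longrightarrow> Vn p n G \<Longrightarrow> Vn p n (\<lambda>w. F w + G w)"
  unfolding Vn_def by (auto intro: holomorphic_intros simp: distrib_right)

lemma Vn_diff: "Vn p n F \<Longrightarrow> Vn p n G \<Longrightarrow> Vn p n (\<lambda>w. F w - G w)"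
  unfolding Vn_def by (auto intro: holomorphic_intros simp: left_diff_distrib)

lemma Vn_scale: "Vn p n F \<Longrightarrow> Vn p n (\<lambda>w. s * F w)"
  unfolding Vn_def by (auto intro: holomorphic_intros simp: mult.assoc)

lemma Vn_zero: "Vn p n (\<lambda>w. 0)"
  unfolding Vn_def by auto

lemma Vn_sum: "finite I \<Longrightarrow> (\<And>i. i \<in> I \<Longrightarrow> Vn p n (F i)) \<Longrightarrow> Vn p n (\<lambda>w. \<Sum>i\<in>I. F i w)"
proof (induction I rule: finite_induct)
  case empty then show ?case using Vn_zero by simp
next
  case (insert i I)
  have "Vn p n (\<lambda>w. F i w + (\<Sum>i\<in>I. F i w))" using insert by (intro Vn_add) auto
  thus ?case using insert by simp
qed



definition Lfac :: "complex \<Rightarrow> complex \<Rightarrow> complex \<Rightarrow> complex \<Rightarrow> complex \<Rightarrow> nat \<Rightarrow> complex" where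
  "Lfac q p a c z n = (tpoch (a ^ 2 * q) q p n * tpoch q q p n
                    * tpoch (c * z) q p n * tpoch (c / z) q p n)
                 / (tpoch (a * c) q p n * tpoch (c / a) q p n
                    * tpoch (a * q * z) q p n * tpoch (a * q / z) q p n)"

definition Wfac :: "complex \<Rightarrow> complex \<Rightarrow> complex \<Rightarrow> complex \<Rightarrow> complex \<Rightarrow> nat \<Rightarrow> nat \<Rightarrow> complex" where
  "Wfac q p a c z n k = q ^ k * theta (a ^ 2 * q ^ (2 * k)) p / theta (a ^ 2) p
               * (tpoch (q powi (- int n)) q p k * tpoch (a ^ 2) q p k
                  * tpoch (a * q / c) q p k * tpoch (a * c * q ^ n) q p k
                  * tpoch (a * z) q p k * tpoch (a / z) q p k)
               / (tpoch q q p k * tpoch (a ^ 2 * q ^ (n + 1)) q p k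
                  * tpoch (a * c) q p k * tpoch (a * q powi (1 - int n) / c) q p k
                  * tpoch (a * q * z) q p k * tpoch (a * q / z) q p k)"

definition wpr :: "complex \<Rightarrow> complex \<Rightarrow> complex \<Rightarrow> complex \<Rightarrow> nat \<Rightarrow> nat \<Rightarrow> complex" where
  "wpr q p a c n k = q ^ k * theta (a ^ 2 * q ^ (2 * k)) p / theta (a ^ 2) p
               * (tpoch (q powi (- int n)) q p k * tpoch (a ^ 2) q p k
                  * tpoch (a * q / c) q p k * tpoch (a * c * q ^ n) q p k)
               / (tpoch q q p k * tpoch (a ^ 2 * q ^ (n + 1)) q p k
                  * tpoch (a * c) q p k * tpoch (a * q powi (1 - int n) / c) q p k)"

lemma node_id:
  fixes a c q p :: complex
  assumes p: "norm p < 1" "p \<noteq> 0" and q: "q \<noteq> 0" and a: "a \<noteq> 0" and c: "c \<noteq> 0" and j: "j \<le> n"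
    and nz: "theta (a ^ 2) p \<noteq> 0" "tpoch (a * c) q p n \<noteq> 0" "tpoch (c / a) q p n \<noteq> 0"
      "tpoch q q p j \<noteq> 0" "tpoch (a ^ 2 * q ^ (n + 1)) q p j \<noteq> 0" "tpoch (a * c) q p j \<noteq> 0"
      "tpoch (a * q powi (1 - int n) / c) q p j \<noteq> 0"
  shows "wpr q p a c n j * (\<Prod>i\<in>{0..n} - {j}. tpair p (a * q ^ i) (a * q ^ j))
       = tpoch (a ^ 2 * q) q p n * tpoch q q p n / (tpoch (a * c) q p n * tpoch (c / a) q p n)
         * (tpoch (c * (a * q ^ j)) q p n * tpoch (c / (a * q ^ j)) q p n)"
  unfolding wpr_def by (rule node_id2[OF assms])

lemma tpoch_tpair0:
  "tpoch (a * z) q p k * tpoch (a / z) q p k = (\<Prod>i<k. tpair p (a * q ^ i) z)"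
proof -
  have "tpoch (a * z) q p k * tpoch (a / z) q p k = (\<Prod>i<k. theta (a * z * q ^ i) p * theta (a / z * q ^ i) p)"
    unfolding tpoch_def by (rule prod.distrib[symmetric])
  also have "\<dots> = (\<Prod>i<k. tpair p (a * q ^ i) z)"
  proof (rule prod.cong[OF refl])
    fix i
    have e1: "a * z * q ^ i = a * q ^ i * z" by (simp add: mult_ac)
    have e2: "a / z * q ^ i = a * q ^ i / z" by simp
    show "theta (a * z * q ^ i) p * theta (a / z * q ^ i) p = tpair p (a * q ^ i) z"
      unfolding tpair_def e1 e2 ..
  qed
  finally show ?thesis .
qed

lemma tpoch_tpair1:
  "tpoch (a * q * z) q p k * tpoch (a * q / z) q p k = (\<Prod>i\<in>{1..k}. tpair p (a * q ^ i) z)"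
proof -
  have "tpoch (a * q * z) q p k * tpoch (a * q / z) q p k = (\<Prod>i<k. theta (a * q * z * q ^ i) p * theta (a * q / z * q ^ i) p)"
    unfolding tpoch_def by (rule prod.distrib[symmetric])
  also have "\<dots> = (\<Prod>i<k. tpair p (a * q ^ Suc i) z)"
  proof (rule prod.cong[OF refl])
    fix i
    have e1: "a * q * z * q ^ i = a * q ^ Suc i * z" by (simp add: mult_ac)
    have e2: "a * q / z * q ^ i = a * q ^ Suc i / z" by (simp add: mult_ac)
    show "theta (a * q * z * q ^ i) p * theta (a * q / z * q ^ i) p = tpair p (a * q ^ Suc i) z"
      unfolding tpair_def e1 e2 ..
  qed
  also have "\<dots> = (\<Prod>i\<in>{1..k}. tpair p (a * q ^ i) z)"
    using prod.atLeast1_atMost_eq[of "\<lambda>i. tpair p (a * q ^ i) z" k] by simp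
  finally show ?thesis .
qed

lemma tpoch_prefix_nz:
  assumes "tpoch x q p n \<noteq> 0" "k \<le> n"
  shows "tpoch x q p k \<noteq> 0"
  using assms unfolding tpoch_def by (auto simp: prod_zero_iff)

lemma OV_generic:
  fixes a c z q p :: complex and n :: nat and G :: "complex \<Rightarrow> complex"
  assumes p: "norm p < 1" "p \<noteq> 0" and q: "q \<noteq> 0" and a: "a \<noteq> 0" and c: "c \<noteq> 0" and z: "z \<noteq> 0"
    and V: "Vn p n G"
    and gen1: "\<forall>s\<le>2*n. theta (a ^ 2 * q ^ s) p \<noteq> 0"
    and gen2: "\<forall>s\<in>{1..n}. theta (q ^ s) p \<noteq> 0"
    and nz1: "tpoch (a * c) q p n \<noteq> 0" "tpoch (c / a) q p n \<noteq> 0"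
       "tpoch (a * q * z) q p n \<noteq> 0" "tpoch (a * q / z) q p n \<noteq> 0"
    and nz2: "\<forall>k\<le>n. tpoch q q p k \<noteq> 0 \<and> tpoch (a ^ 2 * q ^ (n + 1)) q p k \<noteq> 0 \<and>
                tpoch (a * c) q p k \<noteq> 0 \<and> tpoch (a * q powi (1 - int n) / c) q p k \<noteq> 0"
    and Dcz: "tpoch (c * z) q p n * tpoch (c / z) q p n \<noteq> 0"
    and Dcn: "\<forall>j\<le>n. tpoch (c * (a * q ^ j)) q p n * tpoch (c / (a * q ^ j)) q p n \<noteq> 0"
  shows "Lfac q p a c z n * (G z / (tpoch (c * z) q p n * tpoch (c / z) q p n))
       = (\<Sum>k\<in>{..n}. Wfac q p a c z n k * (G (a * q ^ k) / (tpoch (c * (a * q ^ k)) q p n * tpoch (c / (a * q ^ k)) q p n)))"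
proof -
  define P where "P = tpoch (a ^ 2 * q) q p n * tpoch q q p n / (tpoch (a * c) q p n * tpoch (c / a) q p n)"
  define Dc where "Dc w = tpoch (c * w) q p n * tpoch (c / w) q p n" for w
  define \<beta> where "\<beta> k = wpr q p a c n k * (G (a * q ^ k) / Dc (a * q ^ k))" for k
  define B where "B k w = (\<Prod>i\<in>{0..n} - {k}. tpair p (a * q ^ i) w)" for k w
  define H where "H w = P * G w - (\<Sum>k\<in>{..n}. \<beta> k * B k w)" for w
  have VB: "Vn p n (B k)" if k: "k \<le> n" for k
  proof -
    have "card ({0..n} - {k}) = n" using k by simp
    thus ?thesis unfolding B_def using Vn_prod_tpair[OF p, of "{0..n} - {k}" "\<lambda>i. a * q ^ i"] a q by simp
  qed
  have VH: "Vn p n H"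
    unfolding H_def by (intro Vn_diff Vn_scale V Vn_sum) (auto intro: Vn_scale VB)
  have Bzero: "B k (a * q ^ j) = 0" if "k \<le> n" "j \<le> n" "k \<noteq> j" for k j
  proof -
    have "j \<in> {0..n} - {k}" using that by auto
    moreover have "tpair p (a * q ^ j) (a * q ^ j) = 0"
      unfolding tpair_def using a q theta_1[OF p(1)] by simp
    ultimately show ?thesis unfolding B_def by (auto intro: prod_zero)
  qed
  have Hnode: "H (a * q ^ j) = 0" if j: "j \<le> n" for j
  proof -
    have "(\<Sum>k\<in>{..n}. \<beta> k * B k (a * q ^ j)) = \<beta> j * B j (a * q ^ j)"
    proof -
      have "(\<Sum>k\<in>{..n}. \<beta> k * B k (a * q ^ j)) = \<beta> j * B j (a * q ^ j) + (\<Sum>k\<in>{..n} - {j}. \<beta> k * B k (a * q ^ j))"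
        using j by (subst sum.remove[of _ j]) auto
      also have "(\<Sum>k\<in>{..n} - {j}. \<beta> k * B k (a * q ^ j)) = 0"
        using Bzero j by (intro sum.neutral) auto
      finally show ?thesis by simp
    qed
    moreover have "wpr q p a c n j * B j (a * q ^ j) = P * Dc (a * q ^ j)"
      unfolding B_def P_def Dc_def
      by (rule node_id[OF p q a c j]) (use gen1 nz1 nz2 j in auto)
    moreover have "Dc (a * q ^ j) \<noteq> 0" using Dcn j unfolding Dc_def by auto
    ultimately show ?thesis unfolding H_def \<beta>_def by (simp add: field_simps)
  qed
  have Hz: "H z = 0"
  proof (rule uniqueness[OF p VH, of "\<lambda>i. a * q ^ i"])
    show "\<forall>j\<le>n. H (a * q ^ j) = 0" using Hnode by auto
    show "\<forall>j\<le>n. a * q ^ j \<noteq> 0" using a q by auto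
    show "\<forall>i\<le>n. \<forall>j\<le>n. theta (a * q ^ i * (a * q ^ j)) p \<noteq> 0"
    proof (intro allI impI)
      fix i j assume "i \<le> n" "j \<le> n"
      hence "i + j \<le> 2 * n" by simp
      moreover have "a * q ^ i * (a * q ^ j) = a ^ 2 * q ^ (i + j)" by (simp add: power_add power2_eq_square mult_ac)
      ultimately show "theta (a * q ^ i * (a * q ^ j)) p \<noteq> 0" using gen1 by simp
    qed
    show "\<forall>i\<le>n. \<forall>j\<le>n. i \<noteq> j \<longrightarrow> theta (a * q ^ i / (a * q ^ j)) p \<noteq> 0"
    proof (intro allI impI)
      fix i j assume ij: "i \<le> n" "j \<le> n" "i \<noteq> j"
      show "theta (a * q ^ i / (a * q ^ j)) p \<noteq> 0"
      proof (cases "i < j")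
        case True
        have e: "a * q ^ i / (a * q ^ j) = 1 / q ^ (j - i)"
          using True a q by (simp add: power_diff)
        have "j - i \<in> {1..n}" using True ij by auto
        hence "theta (q ^ (j - i)) p \<noteq> 0" using gen2 by blast
        thus ?thesis unfolding e using theta_inv[OF p(1), of "q ^ (j - i)"] q by simp
      next
        case False
        hence "j < i" using ij by simp
        hence e: "a * q ^ i / (a * q ^ j) = q ^ (i - j)"
          using a q by (simp add: power_diff)
        have "i - j \<in> {1..n}" using \<open>j < i\<close> ij by auto
        thus ?thesis unfolding e using gen2 by blast
      qed
    qed
    show "z \<noteq> 0" by (rule z)
    show "(\<Prod>j\<in>{1..n}. tpair p (a * q ^ j) z) \<noteq> 0"
    proof -
      have "tpoch (a * q * z) q p n * tpoch (a * q / z) q p n \<noteq> 0" using nz1 by simp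
      thus ?thesis unfolding tpoch_tpair1 .
    qed
  qed
  define E where "E = tpoch (a * q * z) q p n * tpoch (a * q / z) q p n"
  have E: "E \<noteq> 0" unfolding E_def using nz1 by simp
  have Wk: "Wfac q p a c z n k * (G (a * q ^ k) / Dc (a * q ^ k)) = \<beta> k * B k z / E" if k: "k \<le> n" for k
  proof -
    define R where "R = (\<Prod>i\<in>{Suc k..n}. tpair p (a * q ^ i) z)"
    have E2: "E = (\<Prod>i\<in>{1..k}. tpair p (a * q ^ i) z) * R"
    proof -
      have "E = (\<Prod>i\<in>{1..n}. tpair p (a * q ^ i) z)" unfolding E_def by (rule tpoch_tpair1)
      also have "{1..n} = {1..k} \<union> {Suc k..n}" using k by auto
      also have "(\<Prod>i\<in>{1..k} \<union> {Suc k..n}. tpair p (a * q ^ i) z) = (\<Prod>i\<in>{1..k}. tpair p (a * q ^ i) z) * R"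
        unfolding R_def by (rule prod.union_disjoint) auto
      finally show ?thesis .
    qed
    have B2: "B k z = (\<Prod>i<k. tpair p (a * q ^ i) z) * R"
    proof -
      have "{0..n} - {k} = {..<k} \<union> {Suc k..n}" using k by auto
      hence "B k z = (\<Prod>i\<in>{..<k} \<union> {Suc k..n}. tpair p (a * q ^ i) z)" unfolding B_def by simp
      also have "\<dots> = (\<Prod>i<k. tpair p (a * q ^ i) z) * R"
        unfolding R_def by (rule prod.union_disjoint) auto
      finally show ?thesis .
    qed
    have R: "R \<noteq> 0" using E E2 by auto
    have W: "Wfac q p a c z n k = wpr q p a c n k * ((tpoch (a * z) q p k * tpoch (a / z) q p k) / (tpoch (a * q * z) q p k * tpoch (a * q / z) q p k))"
      unfolding Wfac_def wpr_def by (simp add: field_simps)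
    have "(tpoch (a * z) q p k * tpoch (a / z) q p k) / (tpoch (a * q * z) q p k * tpoch (a * q / z) q p k) = B k z / E"
      unfolding tpoch_tpair1[of a q z p k] tpoch_tpair0[of a z q p k] E2 B2 using R by simp
    thus ?thesis unfolding W \<beta>_def by (simp add: mult_ac)
  qed
  have "(\<Sum>k\<in>{..n}. Wfac q p a c z n k * (G (a * q ^ k) / Dc (a * q ^ k))) = (\<Sum>k\<in>{..n}. \<beta> k * B k z) / E"
    using Wk by (simp add: sum_divide_distrib)
  also have "(\<Sum>k\<in>{..n}. \<beta> k * B k z) = P * G z" using Hz unfolding H_def by simp
  also have "P * G z / E = Lfac q p a c z n * (G z / Dc z)"
    unfolding Lfac_def P_def E_def Dc_def using Dcz by (simp add: field_simps)
  finally show ?thesis unfolding Dc_def by simp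
qed



lemma tpoch_tendsto [tendsto_intros]:
  assumes "norm p < 1" "q \<noteq> 0" "(f \<longlongrightarrow> l) F" "l \<noteq> 0"
  shows "((\<lambda>x. tpoch (f x) q p n) \<longlongrightarrow> tpoch l q p n) F"
  unfolding tpoch_def using assms by (intro tendsto_intros) auto

lemma evnz: "(f \<longlongrightarrow> l) F \<Longrightarrow> l \<noteq> 0 \<Longrightarrow> eventually (\<lambda>x. f x \<noteq> (0::complex)) F"
  by (rule tendsto_imp_eventually_ne)

lemma bad_countable:
  fixes p q :: complex
  assumes p: "norm p < 1" "p \<noteq> 0" and q: "q \<noteq> 0"
  shows "countable {a. a \<noteq> 0 \<and> (\<exists>s\<le>N. theta (a ^ 2 * q ^ s) p = 0)}"
proof -
  define S where "S st = {a::complex. a ^ 2 = p powi (snd st) / q ^ (fst st)}" for st :: "nat \<times> int"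
  have fin: "finite (S st)" for st
  proof -
    define w where "w = p powi (snd st) / q ^ (fst st)"
    have "S st \<subseteq> {csqrt w, - csqrt w}"
    proof
      fix a assume "a \<in> S st"
      hence "a ^ 2 = (csqrt w) ^ 2" unfolding S_def w_def by simp
      thus "a \<in> {csqrt w, - csqrt w}" unfolding power2_eq_iff by auto
    qed
    thus ?thesis by (rule finite_subset) auto
  qed
  have "{a. a \<noteq> 0 \<and> (\<exists>s\<le>N. theta (a ^ 2 * q ^ s) p = 0)} \<subseteq> (\<Union>st\<in>UNIV. S st)"
  proof
    fix a assume "a \<in> {a. a \<noteq> 0 \<and> (\<exists>s\<le>N. theta (a ^ 2 * q ^ s) p = 0)}"
    then obtain s where a: "a \<noteq> 0" and s: "theta (a ^ 2 * q ^ s) p = 0" by auto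
    have "a ^ 2 * q ^ s \<noteq> 0" using a q by simp
    then obtain k where k: "a ^ 2 * q ^ s = p powi k" using theta_zero[OF p _ s] by blast
    have "a ^ 2 = p powi k / q ^ s" using k q by (simp add: field_simps)
    hence "a \<in> S (s, k)" unfolding S_def by simp
    thus "a \<in> (\<Union>st\<in>UNIV. S st)" by blast
  qed
  moreover have "countable (\<Union>st\<in>UNIV. S st)"
    by (rule countable_UN) (auto intro: countable_finite fin)
  ultimately show ?thesis by (rule countable_subset)
qed

lemma exists_good_point:
  fixes a0 :: complex
  assumes "countable B" "d > 0"
  shows "\<exists>a. a \<noteq> a0 \<and> dist a a0 < d \<and> a \<notin> B"
proof (rule ccontr)
  assume "\<not> ?thesis"
  hence "ball a0 d \<subseteq> B \<union> {a0}" by (auto simp: dist_commute)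
  moreover have "countable (B \<union> {a0})" using assms(1) by simp
  ultimately have "countable (ball a0 d)" by (rule countable_subset)
  thus False using uncountable_ball[of d a0] assms(2) by blast
qed

lemma OV_full:
  fixes a0 c z q p :: complex and n :: nat and G :: "complex \<Rightarrow> complex"
  assumes p: "norm p < 1" "p \<noteq> 0" and q: "q \<noteq> 0" and c: "c \<noteq> 0" and z: "z \<noteq> 0"
    and V: "Vn p n G" and a0: "a0 \<noteq> 0"
    and h2: "theta (a0 ^ 2) p \<noteq> 0"
    and h3: "tpoch (a0 * c) q p n \<noteq> 0" "tpoch (c / a0) q p n \<noteq> 0"
       "tpoch (a0 * q * z) q p n \<noteq> 0" "tpoch (a0 * q / z) q p n \<noteq> 0"
    and h4: "\<forall>k\<le>n. tpoch q q p k \<noteq> 0 \<and> tpoch (a0 ^ 2 * q ^ (n + 1)) q p k \<noteq> 0 \<and>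
                tpoch (a0 * c) q p k \<noteq> 0 \<and> tpoch (a0 * q powi (1 - int n) / c) q p k \<noteq> 0"
    and Dcz: "tpoch (c * z) q p n * tpoch (c / z) q p n \<noteq> 0"
    and Dcn: "\<forall>j\<le>n. tpoch (c * (a0 * q ^ j)) q p n * tpoch (c / (a0 * q ^ j)) q p n \<noteq> 0"
  shows "Lfac q p a0 c z n * (G z / (tpoch (c * z) q p n * tpoch (c / z) q p n))
       = (\<Sum>k\<in>{..n}. Wfac q p a0 c z n k * (G (a0 * q ^ k) / (tpoch (c * (a0 * q ^ k)) q p n * tpoch (c / (a0 * q ^ k)) q p n)))"
proof (rule ccontr)
  define LH where "LH a = Lfac q p a c z n * (G z / (tpoch (c * z) q p n * tpoch (c / z) q p n))" for a
  define RH where "RH a = (\<Sum>k\<in>{..n}. Wfac q p a c z n k * (G (a * q ^ k) / (tpoch (c * (a * q ^ k)) q p n * tpoch (c / (a * q ^ k)) q p n)))" for a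
  assume neq: "\<not> ?thesis"
  have ne: "LH a0 - RH a0 \<noteq> 0" using neq unfolding LH_def RH_def by simp
  have gen2: "\<forall>s\<in>{1..n}. theta (q ^ s) p \<noteq> 0"
  proof
    fix s assume s: "s \<in> {1..n}"
    have "tpoch q q p n \<noteq> 0" using h4 by auto
    hence "theta (q * q ^ (s - 1)) p \<noteq> 0" using s unfolding tpoch_def by (auto simp: prod_zero_iff)
    moreover have "q * q ^ (s - 1) = q ^ s" using s by (cases s) auto
    ultimately show "theta (q ^ s) p \<noteq> 0" by simp
  qed
  have hol: "G holomorphic_on - {0}" using V unfolding Vn_def by simp
  have id: "((\<lambda>a. a) \<longlongrightarrow> a0) (at a0)" by (rule tendsto_ident_at)
  have h4': "\<forall>k\<le>n. tpoch (a0 * q * z) q p k \<noteq> 0 \<and> tpoch (a0 * q / z) q p k \<noteq> 0"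
    using h3 tpoch_prefix_nz by blast
  have Gt: "((\<lambda>a. G (a * q ^ k)) \<longlongrightarrow> G (a0 * q ^ k)) (at a0)" for k
  proof -
    have "isCont G (a0 * q ^ k)" using isCont_holo[OF hol] a0 q by simp
    moreover have "((\<lambda>a. a * q ^ k) \<longlongrightarrow> a0 * q ^ k) (at a0)" by (intro tendsto_intros)
    ultimately show ?thesis by (rule isCont_tendsto_compose)
  qed
  have tL: "(LH \<longlongrightarrow> LH a0) (at a0)"
    unfolding LH_def Lfac_def using p q c z a0 h3 Dcz
    by (intro tendsto_intros id) auto
  have tR: "(RH \<longlongrightarrow> RH a0) (at a0)"
    unfolding RH_def Wfac_def using p q c z a0 h2 h4 h4' Dcn
    by (intro tendsto_intros id Gt) auto
  have ev: "eventually (\<lambda>a. LH a - RH a \<noteq> 0 \<and> a \<noteq> 0 \<and> theta (a ^ 2) p \<noteq> 0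
        \<and> tpoch (a * c) q p n \<noteq> 0 \<and> tpoch (c / a) q p n \<noteq> 0
        \<and> tpoch (a * q * z) q p n \<noteq> 0 \<and> tpoch (a * q / z) q p n \<noteq> 0
        \<and> (\<forall>k\<in>{..n}. tpoch (a ^ 2 * q ^ (n + 1)) q p k \<noteq> 0 \<and>
                tpoch (a * c) q p k \<noteq> 0 \<and> tpoch (a * q powi (1 - int n) / c) q p k \<noteq> 0)
        \<and> (\<forall>j\<in>{..n}. tpoch (c * (a * q ^ j)) q p n * tpoch (c / (a * q ^ j)) q p n \<noteq> 0)) (at a0)"
  proof (intro eventually_conj eventually_ball_finite ballI finite_atMost)
    show "eventually (\<lambda>a. LH a - RH a \<noteq> 0) (at a0)" by (rule evnz[OF tendsto_diff[OF tL tR] ne])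
    show "eventually (\<lambda>a. a \<noteq> 0) (at a0)" by (rule evnz[OF id a0])
    show "eventually (\<lambda>a. theta (a ^ 2) p \<noteq> 0) (at a0)"
      by (rule evnz[OF _ h2]) (use a0 p in \<open>intro tendsto_intros id, auto\<close>)
    show "eventually (\<lambda>a. tpoch (a * c) q p n \<noteq> 0) (at a0)"
      by (rule evnz[OF _ h3(1)]) (use a0 p q c in \<open>intro tendsto_intros id, auto\<close>)
    show "eventually (\<lambda>a. tpoch (c / a) q p n \<noteq> 0) (at a0)"
      by (rule evnz[OF _ h3(2)]) (use a0 p q c in \<open>intro tendsto_intros id, auto\<close>)
    show "eventually (\<lambda>a. tpoch (a * q * z) q p n \<noteq> 0) (at a0)"
      by (rule evnz[OF _ h3(3)]) (use a0 p q z in \<open>intro tendsto_intros id, auto\<close>)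
    show "eventually (\<lambda>a. tpoch (a * q / z) q p n \<noteq> 0) (at a0)"
      by (rule evnz[OF _ h3(4)]) (use a0 p q z in \<open>intro tendsto_intros id, auto\<close>)
    fix k assume k: "k \<in> {..n}"
    show "eventually (\<lambda>a. tpoch (a ^ 2 * q ^ (n + 1)) q p k \<noteq> 0) (at a0)"
      by (rule evnz[of _ "tpoch (a0 ^ 2 * q ^ (n + 1)) q p k"]) (use a0 p q k h4 in \<open>intro tendsto_intros id, auto\<close>)
    show "eventually (\<lambda>a. tpoch (a * c) q p k \<noteq> 0) (at a0)"
      by (rule evnz[of _ "tpoch (a0 * c) q p k"]) (use a0 p q c k h4 in \<open>intro tendsto_intros id, auto\<close>)
    show "eventually (\<lambda>a. tpoch (a * q powi (1 - int n) / c) q p k \<noteq> 0) (at a0)"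
      by (rule evnz[of _ "tpoch (a0 * q powi (1 - int n) / c) q p k"]) (use a0 p q c k h4 in \<open>intro tendsto_intros id, auto\<close>)
    show "eventually (\<lambda>a. tpoch (c * (a * q ^ k)) q p n * tpoch (c / (a * q ^ k)) q p n \<noteq> 0) (at a0)"
      by (rule evnz[of _ "tpoch (c * (a0 * q ^ k)) q p n * tpoch (c / (a0 * q ^ k)) q p n"]) (use a0 p q c k Dcn in \<open>intro tendsto_intros id, auto\<close>)
  qed
  then obtain d where d: "d > 0" and dP: "\<And>a. a \<noteq> a0 \<Longrightarrow> dist a a0 < d \<Longrightarrow>
       LH a - RH a \<noteq> 0 \<and> a \<noteq> 0 \<and> theta (a ^ 2) p \<noteq> 0
        \<and> tpoch (a * c) q p n \<noteq> 0 \<and> tpoch (c / a) q p n \<noteq> 0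
        \<and> tpoch (a * q * z) q p n \<noteq> 0 \<and> tpoch (a * q / z) q p n \<noteq> 0
        \<and> (\<forall>k\<in>{..n}. tpoch (a ^ 2 * q ^ (n + 1)) q p k \<noteq> 0 \<and>
                tpoch (a * c) q p k \<noteq> 0 \<and> tpoch (a * q powi (1 - int n) / c) q p k \<noteq> 0)
        \<and> (\<forall>j\<in>{..n}. tpoch (c * (a * q ^ j)) q p n * tpoch (c / (a * q ^ j)) q p n \<noteq> 0)"
    unfolding eventually_at by auto
  obtain a where a: "a \<noteq> a0" "dist a a0 < d" "a \<notin> {a. a \<noteq> 0 \<and> (\<exists>s\<le>2*n. theta (a ^ 2 * q ^ s) p = 0)}"
    using exists_good_point[OF bad_countable[OF p q] d] by blast
  note P = dP[OF a(1,2)]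
  have "LH a = RH a"
    unfolding LH_def RH_def
  proof (rule OV_generic[OF p q _ c z V])
    show "a \<noteq> 0" using P by simp
    show "\<forall>s\<le>2*n. theta (a ^ 2 * q ^ s) p \<noteq> 0" using a(3) P by auto
    show "\<forall>s\<in>{1..n}. theta (q ^ s) p \<noteq> 0" by (rule gen2)
    show "tpoch (a * c) q p n \<noteq> 0" "tpoch (c / a) q p n \<noteq> 0"
       "tpoch (a * q * z) q p n \<noteq> 0" "tpoch (a * q / z) q p n \<noteq> 0" using P by auto
    show "\<forall>k\<le>n. tpoch q q p k \<noteq> 0 \<and> tpoch (a ^ 2 * q ^ (n + 1)) q p k \<noteq> 0 \<and>
                tpoch (a * c) q p k \<noteq> 0 \<and> tpoch (a * q powi (1 - int n) / c) q p k \<noteq> 0"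
      using P h4 by auto
    show "tpoch (c * z) q p n * tpoch (c / z) q p n \<noteq> 0" by (rule Dcz)
    show "\<forall>j\<le>n. tpoch (c * (a * q ^ j)) q p n * tpoch (c / (a * q ^ j)) q p n \<noteq> 0" using P by auto
  qed
  thus False using P by simp
qed



lemma Vn_mult:
  assumes "Vn p k1 F" "Vn p k2 S"
  shows "Vn p (k1 + k2) (\<lambda>w. F w * S w)"
  using assms unfolding Vn_def
proof (intro conjI allI impI)
  assume A: "F holomorphic_on - {0} \<and> (\<forall>w. w \<noteq> 0 \<longrightarrow> F (1 / w) = F w) \<and> (\<forall>w. w \<noteq> 0 \<longrightarrow> F (p * w) * (p * w\<^sup>2) ^ k1 = F w)"
     and B: "S holomorphic_on - {0} \<and> (\<forall>w. w \<noteq> 0 \<longrightarrow> S (1 / w) = S w) \<and> (\<forall>w. w \<noteq> 0 \<longrightarrow> S (p * w) * (p * w\<^sup>2) ^ k2 = S w)"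
  show "(\<lambda>w. F w * S w) holomorphic_on - {0}" using A B by (intro holomorphic_intros) auto
  fix w :: complex assume w: "w \<noteq> 0"
  show "F (1 / w) * S (1 / w) = F w * S w" using A B w by simp
  have "F (p * w) * S (p * w) * (p * w\<^sup>2) ^ (k1 + k2) = (F (p * w) * (p * w\<^sup>2) ^ k1) * (S (p * w) * (p * w\<^sup>2) ^ k2)"
    by (simp add: power_add mult_ac)
  also have "\<dots> = F w * S w" using A B w by simp
  finally show "F (p * w) * S (p * w) * (p * w\<^sup>2) ^ (k1 + k2) = F w * S w" .
qed

lemma powi_cancel:
  fixes p w :: complex
  assumes "p \<noteq> 0" "w \<noteq> 0"
  shows "p powi (- int K) * w powi (- 2 * int K) * (p * w ^ 2) ^ K = 1"
proof -
  have a: "p powi (- int K) = inverse (p ^ K)" by (simp add: power_int_minus)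
  have "- 2 * int K = - int (2 * K)" by simp
  hence b: "w powi (- 2 * int K) = inverse (w ^ (2 * K))" by (metis power_int_minus power_int_of_nat)
  have c: "(p * w ^ 2) ^ K = p ^ K * w ^ (2 * K)" by (simp add: power_mult_distrib power_mult)
  show ?thesis unfolding a b c using assms by (simp add: field_simps)
qed

lemma Vn_g:
  assumes W: "Wgen m p k g" and j: "j < m" and y: "\<forall>i<m. y i \<noteq> 0" and p: "p \<noteq> 0"
  shows "Vn p (k j) (\<lambda>w. g (y(j := w)))"
  unfolding Vn_def
proof (intro conjI allI impI)
  have W2: "\<And>z. (\<forall>i<m. z i \<noteq> 0) \<Longrightarrow> (\<forall>i<m. (\<lambda>w. g (z(i := w))) holomorphic_on (- {0}) \<and>
        g (z(i := 1 / z i)) = g z \<and>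
        g (z(i := p * z i)) = p powi (- int (k i)) * z i powi (- 2 * int (k i)) * g z)"
    using W unfolding Wgen_def by blast
  show "(\<lambda>w. g (y(j := w))) holomorphic_on - {0}" using W2[OF y] j by blast
  fix w :: complex assume w: "w \<noteq> 0"
  have y': "\<forall>i<m. (y(j := w)) i \<noteq> 0" using y w by auto
  note X = W2[OF y', rule_format, OF j]
  show "g (y(j := 1 / w)) = g (y(j := w))" using X by simp
  have "g (y(j := p * w)) = p powi (- int (k j)) * w powi (- 2 * int (k j)) * g (y(j := w))" using X by simp
  hence "g (y(j := p * w)) * (p * w\<^sup>2) ^ k j = (p powi (- int (k j)) * w powi (- 2 * int (k j)) * (p * w\<^sup>2) ^ k j) * g (y(j := w))"
    by (simp add: mult_ac)
  also have "\<dots> = g (y(j := w))" using powi_cancel[OF p w] by simp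
  finally show "g (y(j := p * w)) * (p * w\<^sup>2) ^ k j = g (y(j := w))" .
qed

lemma Wspace_local:
  assumes "f \<in> Wspace m q p c n" "\<forall>i<m. z i = z' i"
  shows "f z = f z'"
  using assms(1)
proof (induction f rule: Wspace.induct)
  case (gen k g)
  have "g z = g z'" using gen(2) assms(2) unfolding Wgen_def by blast
  moreover have "(\<Prod>i<m. tpoch (c i * z i) q p (k i) * tpoch (c i / z i) q p (k i))
      = (\<Prod>i<m. tpoch (c i * z' i) q p (k i) * tpoch (c i / z' i) q p (k i))"
    using assms(2) by (intro prod.cong) auto
  ultimately show ?case by simp
qed auto

lemma tpoch_split: "tpoch x q p (k + l) = tpoch x q p k * tpoch (x * q ^ k) q p l"
  unfolding tpoch_def
proof (induction l)
  case 0 then show ?case by simp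
next
  case (Suc l)
  show ?case by (simp add: Suc power_add mult_ac)
qed

lemma div_aux: "(S::complex) \<noteq> 0 \<Longrightarrow> X / (K * R) = (1 / R * (X * S)) / (K * S)"
  by (cases "R = 0"; cases "K = 0") (simp_all add: field_simps)

lemma slice:
  fixes q p :: complex and c y :: "nat \<Rightarrow> complex"
  assumes p: "norm p < 1" "p \<noteq> 0" and q: "q \<noteq> 0" and cnz: "\<forall>i<m. c i \<noteq> 0"
    and f: "f \<in> Wspace m q p c n" and j: "j < m" and y: "\<forall>i<m. y i \<noteq> 0"
  shows "\<exists>G. Vn p (n j) G \<and> (\<forall>w. w \<noteq> 0 \<longrightarrow> tpoch (c j * w) q p (n j) * tpoch (c j / w) q p (n j) \<noteq> 0
            \<longrightarrow> f (y(j := w)) = G w / (tpoch (c j * w) q p (n j) * tpoch (c j / w) q p (n j)))"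
  using f
proof (induction f rule: Wspace.induct)
  case (gen k g)
  define K where "K = k j"
  define N where "N = n j"
  have KN: "K \<le> N" using gen(1) j unfolding K_def N_def by auto
  define cj where "cj = c j"
  have cj: "cj \<noteq> 0" using cnz j unfolding cj_def by auto
  define Rst where "Rst = (\<Prod>i\<in>{..<m} - {j}. tpoch (c i * y i) q p (k i) * tpoch (c i / y i) q p (k i))"
  define S where "S w = (\<Prod>i<N - K. tpair p (cj * q ^ K * q ^ i) w)" for w
  define G where "G w = (1 / Rst) * (g (y(j := w)) * S w)" for w
  have VS: "Vn p (N - K) S"
    unfolding S_def using Vn_prod_tpair[OF p, of "{..<N - K}" "\<lambda>i. cj * q ^ K * q ^ i"] cj q by simp
  have Vg: "Vn p K (\<lambda>w. g (y(j := w)))" unfolding K_def by (rule Vn_g[OF gen(2) j y p(2)])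
  have VG: "Vn p N G"
  proof -
    have "Vn p (K + (N - K)) (\<lambda>w. g (y(j := w)) * S w)" by (rule Vn_mult[OF Vg VS])
    hence "Vn p N (\<lambda>w. g (y(j := w)) * S w)" using KN by simp
    thus ?thesis unfolding G_def by (rule Vn_scale)
  qed
  have eq: "(\<lambda>z. g z / (\<Prod>i<m. tpoch (c i * z i) q p (k i) * tpoch (c i / z i) q p (k i))) (y(j := w))
        = G w / (tpoch (c j * w) q p (n j) * tpoch (c j / w) q p (n j))"
    if w: "w \<noteq> 0" and D: "tpoch (c j * w) q p (n j) * tpoch (c j / w) q p (n j) \<noteq> 0" for w
  proof -
    define Kw where "Kw = tpoch (cj * w) q p K * tpoch (cj / w) q p K"
    have Sw: "S w = tpoch (cj * w * q ^ K) q p (N - K) * tpoch (cj / w * q ^ K) q p (N - K)"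
    proof -
      have "S w = tpoch (cj * q ^ K * w) q p (N - K) * tpoch (cj * q ^ K / w) q p (N - K)"
        unfolding S_def by (rule tpoch_tpair0[symmetric])
      moreover have e1: "cj * q ^ K * w = cj * w * q ^ K" by (simp only: mult.assoc mult.commute[of "q ^ K" w])
      moreover have e2: "cj * q ^ K / w = cj / w * q ^ K" by (simp only: times_divide_eq_left)
      ultimately show ?thesis by (simp only:)
    qed
    have DS: "tpoch (c j * w) q p (n j) * tpoch (c j / w) q p (n j) = Kw * S w"
    proof -
      have "tpoch (cj * w) q p N = tpoch (cj * w) q p K * tpoch (cj * w * q ^ K) q p (N - K)"
        using tpoch_split[of "cj * w" q p K "N - K"] KN by simp
      moreover have "tpoch (cj / w) q p N = tpoch (cj / w) q p K * tpoch (cj / w * q ^ K) q p (N - K)"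
        using tpoch_split[of "cj / w" q p K "N - K"] KN by simp
      ultimately show ?thesis unfolding Kw_def Sw cj_def N_def by (simp add: mult_ac)
    qed
    have prodsplit: "(\<Prod>i<m. tpoch (c i * (y(j := w)) i) q p (k i) * tpoch (c i / (y(j := w)) i) q p (k i)) = Kw * Rst"
    proof -
      define F where "F i = tpoch (c i * (y(j := w)) i) q p (k i) * tpoch (c i / (y(j := w)) i) q p (k i)" for i
      have "(\<Prod>i<m. F i) = F j * (\<Prod>i\<in>{..<m} - {j}. F i)"
        by (rule prod.remove) (use j in auto)
      moreover have "F j = Kw" unfolding F_def Kw_def cj_def K_def by simp
      moreover have "(\<Prod>i\<in>{..<m} - {j}. F i) = Rst"
        unfolding Rst_def F_def by (rule prod.cong[OF refl]) simp
      ultimately show ?thesis unfolding F_def by simp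
    qed
    have Snz: "S w \<noteq> 0" using D DS by auto
    have "g (y(j := w)) / (Kw * Rst) = G w / (Kw * S w)" unfolding G_def by (rule div_aux[OF Snz])
    thus ?thesis unfolding prodsplit DS by simp
  qed
  show ?case unfolding N_def[symmetric] using VG eq unfolding N_def by blast
next
  case zero
  show ?case by (intro exI[of _ "\<lambda>w. 0"]) (simp add: Vn_zero)
next
  case (add f h)
  from add.IH obtain F H where F: "Vn p (n j) F" "\<forall>w. w \<noteq> 0 \<longrightarrow> tpoch (c j * w) q p (n j) * tpoch (c j / w) q p (n j) \<noteq> 0
            \<longrightarrow> f (y(j := w)) = F w / (tpoch (c j * w) q p (n j) * tpoch (c j / w) q p (n j))"
    and H: "Vn p (n j) H" "\<forall>w. w \<noteq> 0 \<longrightarrow> tpoch (c j * w) q p (n j) * tpoch (c j / w) q p (n j) \<noteq> 0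
            \<longrightarrow> h (y(j := w)) = H w / (tpoch (c j * w) q p (n j) * tpoch (c j / w) q p (n j))"
    by blast
  show ?case
  proof (intro exI[of _ "\<lambda>w. F w + H w"] conjI Vn_add F H allI impI)
    fix w :: complex assume w: "w \<noteq> 0" and D: "tpoch (c j * w) q p (n j) * tpoch (c j / w) q p (n j) \<noteq> 0"
    have "f (y(j := w)) = F w / (tpoch (c j * w) q p (n j) * tpoch (c j / w) q p (n j))" using F(2) w D by blast
    moreover have "h (y(j := w)) = H w / (tpoch (c j * w) q p (n j) * tpoch (c j / w) q p (n j))" using H(2) w D by blast
    ultimately show "f (y(j := w)) + h (y(j := w)) = (F w + H w) / (tpoch (c j * w) q p (n j) * tpoch (c j / w) q p (n j))"
      by (simp add: add_divide_distrib)
  qed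
next
  case (smult f s)
  from smult.IH obtain F where F: "Vn p (n j) F" "\<forall>w. w \<noteq> 0 \<longrightarrow> tpoch (c j * w) q p (n j) * tpoch (c j / w) q p (n j) \<noteq> 0
            \<longrightarrow> f (y(j := w)) = F w / (tpoch (c j * w) q p (n j) * tpoch (c j / w) q p (n j))"
    by blast
  show ?case
  proof (intro exI[of _ "\<lambda>w. s * F w"] conjI Vn_scale F allI impI)
    fix w :: complex assume w: "w \<noteq> 0" and D: "tpoch (c j * w) q p (n j) * tpoch (c j / w) q p (n j) \<noteq> 0"
    have "f (y(j := w)) = F w / (tpoch (c j * w) q p (n j) * tpoch (c j / w) q p (n j))" using F(2) w D by blast
    thus "s * f (y(j := w)) = s * F w / (tpoch (c j * w) q p (n j) * tpoch (c j / w) q p (n j))" by simp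
  qed
qed



lemma multi:
  fixes q p :: complex and a c z :: "nat \<Rightarrow> complex" and n :: "nat \<Rightarrow> nat"
  assumes p: "norm p < 1" "p \<noteq> 0" and q: "q \<noteq> 0" and f: "f \<in> Wspace m q p c n"
    and hz: "\<forall>i<m. a i \<noteq> 0 \<and> c i \<noteq> 0 \<and> z i \<noteq> 0"
    and OVi: "\<And>i G. i < m \<Longrightarrow> Vn p (n i) G \<Longrightarrow> Lfac q p (a i) (c i) (z i) (n i) * (G (z i) / (tpoch (c i * z i) q p (n i) * tpoch (c i / z i) q p (n i)))
       = (\<Sum>k\<in>{..n i}. Wfac q p (a i) (c i) (z i) (n i) k * (G (a i * q ^ k) / (tpoch (c i * (a i * q ^ k)) q p (n i) * tpoch (c i / (a i * q ^ k)) q p (n i))))"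
    and Dcz: "\<forall>i<m. tpoch (c i * z i) q p (n i) * tpoch (c i / z i) q p (n i) \<noteq> 0"
    and Dcn: "\<forall>i<m. \<forall>j\<le>n i. tpoch (c i * (a i * q ^ j)) q p (n i) * tpoch (c i / (a i * q ^ j)) q p (n i) \<noteq> 0"
  shows "j \<le> m \<Longrightarrow> (\<Prod>i<j. Lfac q p (a i) (c i) (z i) (n i)) * f z
     = (\<Sum>k\<in>PiE {..<j} (\<lambda>i. {..n i}). (\<Prod>i<j. Wfac q p (a i) (c i) (z i) (n i) (k i))
          * f (\<lambda>i. if i < j then a i * q ^ k i else z i))"
proof (induction j)
  case 0
  have "(\<lambda>i. if i < 0 then a i * q ^ (undefined::nat) else z i) = z" by auto
  thus ?case by simp
next
  case (Suc j)
  hence j: "j < m" by simp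
  define T where "T i = {..n i}" for i
  define Wp where "Wp j k = (\<Prod>i<j. Wfac q p (a i) (c i) (z i) (n i) (k i))" for j and k :: "nat \<Rightarrow> nat"
  define pt where "pt j k = (\<lambda>i. if i < j then a i * q ^ k i else z i)" for j and k :: "nat \<Rightarrow> nat"
  have IH: "(\<Prod>i<j. Lfac q p (a i) (c i) (z i) (n i)) * f z = (\<Sum>k\<in>PiE {..<j} T. Wp j k * f (pt j k))"
    using Suc unfolding T_def Wp_def pt_def by simp
  have cj: "c j \<noteq> 0" and aj: "a j \<noteq> 0" and zj: "z j \<noteq> 0" using hz j by auto
  have cnz: "\<forall>i<m. c i \<noteq> 0" using hz by auto
  have step: "Lfac q p (a j) (c j) (z j) (n j) * f (pt j k)
      = (\<Sum>kj\<in>T j. Wfac q p (a j) (c j) (z j) (n j) kj * f ((pt j k)(j := a j * q ^ kj)))" for k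
  proof -
    define y where "y = pt j k"
    have y: "\<forall>i<m. y i \<noteq> 0" unfolding y_def pt_def using hz q by auto
    obtain G where VG: "Vn p (n j) G" and G: "\<And>w. w \<noteq> 0 \<Longrightarrow> tpoch (c j * w) q p (n j) * tpoch (c j / w) q p (n j) \<noteq> 0
            \<Longrightarrow> f (y(j := w)) = G w / (tpoch (c j * w) q p (n j) * tpoch (c j / w) q p (n j))"
      using slice[OF p q cnz f j y] by blast
    have yj: "y(j := z j) = y" unfolding y_def pt_def by auto
    have "f y = G (z j) / (tpoch (c j * z j) q p (n j) * tpoch (c j / z j) q p (n j))"
      using G[OF zj] Dcz j yj by auto
    hence "Lfac q p (a j) (c j) (z j) (n j) * f y = (\<Sum>kj\<in>{..n j}. Wfac q p (a j) (c j) (z j) (n j) kj * (G (a j * q ^ kj) / (tpoch (c j * (a j * q ^ kj)) q p (n j) * tpoch (c j / (a j * q ^ kj)) q p (n j))))"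
      using OVi[OF j VG] by simp
    also have "\<dots> = (\<Sum>kj\<in>{..n j}. Wfac q p (a j) (c j) (z j) (n j) kj * f (y(j := a j * q ^ kj)))"
    proof (rule sum.cong[OF refl])
      fix kj assume "kj \<in> {..n j}"
      hence "a j * q ^ kj \<noteq> 0" "tpoch (c j * (a j * q ^ kj)) q p (n j) * tpoch (c j / (a j * q ^ kj)) q p (n j) \<noteq> 0"
        using aj q Dcn j by auto
      thus "Wfac q p (a j) (c j) (z j) (n j) kj * (G (a j * q ^ kj) / (tpoch (c j * (a j * q ^ kj)) q p (n j) * tpoch (c j / (a j * q ^ kj)) q p (n j)))
          = Wfac q p (a j) (c j) (z j) (n j) kj * f (y(j := a j * q ^ kj))"
        using G by simp
    qed
    finally show ?thesis unfolding y_def T_def .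
  qed
  have "(\<Prod>i<Suc j. Lfac q p (a i) (c i) (z i) (n i)) * f z
      = Lfac q p (a j) (c j) (z j) (n j) * ((\<Prod>i<j. Lfac q p (a i) (c i) (z i) (n i)) * f z)"
    by (simp add: mult_ac)
  also have "\<dots> = (\<Sum>k\<in>PiE {..<j} T. Wp j k * (Lfac q p (a j) (c j) (z j) (n j) * f (pt j k)))"
    unfolding IH by (simp add: sum_distrib_left mult_ac)
  also have "\<dots> = (\<Sum>k\<in>PiE {..<j} T. \<Sum>kj\<in>T j. Wp j k * Wfac q p (a j) (c j) (z j) (n j) kj * f ((pt j k)(j := a j * q ^ kj)))"
    unfolding step by (simp add: sum_distrib_left mult_ac)
  also have "\<dots> = (\<Sum>kj\<in>T j. \<Sum>k\<in>PiE {..<j} T. Wp (Suc j) (k(j := kj)) * f (pt (Suc j) (k(j := kj))))"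
  proof -
    have e: "Wp j k * Wfac q p (a j) (c j) (z j) (n j) kj * f ((pt j k)(j := a j * q ^ kj))
        = Wp (Suc j) (k(j := kj)) * f (pt (Suc j) (k(j := kj)))" for k kj
    proof -
      have "Wp (Suc j) (k(j := kj)) = Wp j k * Wfac q p (a j) (c j) (z j) (n j) kj"
        unfolding Wp_def by (simp add: lessThan_Suc mult_ac)
      moreover have "pt (Suc j) (k(j := kj)) = (pt j k)(j := a j * q ^ kj)"
        unfolding pt_def by (rule ext) simp
      ultimately show ?thesis by simp
    qed
    show ?thesis unfolding e by (rule sum.swap)
  qed
  also have "\<dots> = (\<Sum>(kj, k)\<in>T j \<times> PiE {..<j} T. Wp (Suc j) (k(j := kj)) * f (pt (Suc j) (k(j := kj))))"
    by (rule sum.cartesian_product)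
  also have "\<dots> = (\<Sum>k'\<in>PiE (insert j {..<j}) T. Wp (Suc j) k' * f (pt (Suc j) k'))"
  proof -
    have inj: "inj_on (\<lambda>(y, g). g(j := y)) (T j \<times> PiE {..<j} T)" by (rule inj_combinator) simp
    have "(\<Sum>k'\<in>PiE (insert j {..<j}) T. Wp (Suc j) k' * f (pt (Suc j) k'))
        = (\<Sum>x\<in>T j \<times> PiE {..<j} T. Wp (Suc j) ((\<lambda>(y, g). g(j := y)) x) * f (pt (Suc j) ((\<lambda>(y, g). g(j := y)) x)))"
      unfolding PiE_insert_eq by (subst sum.reindex[OF inj]) (simp add: o_def)
    also have "\<dots> = (\<Sum>(kj, k)\<in>T j \<times> PiE {..<j} T. Wp (Suc j) (k(j := kj)) * f (pt (Suc j) (k(j := kj))))"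
      by (rule sum.cong[OF refl]) (simp add: case_prod_beta)
    finally show ?thesis by simp
  qed
  also have "insert j {..<j} = {..<Suc j}" by auto
  finally show ?case unfolding Wp_def pt_def T_def .
qed

theorem theorem2p12:
  fixes m :: nat and n :: "nat \<Rightarrow> nat" and c a z :: "nat \<Rightarrow> complex"
    and q p :: complex and f :: "(nat \<Rightarrow> complex) \<Rightarrow> complex"
  assumes "m \<ge> 1"
    and "0 < norm q" and "norm q < 1" and "norm p < 1" and "p \<noteq> 0"
    and "f \<in> Wspace m q p c n"
    and "\<forall>i<m. a i \<noteq> 0 \<and> c i \<noteq> 0 \<and> z i \<noteq> 0"
    and "\<forall>i<m. theta (a i ^ 2) p \<noteq> 0"
    and "\<forall>i<m. tpoch (a i * c i) q p (n i) \<noteq> 0 \<and> tpoch (c i / a i) q p (n i) \<noteq> 0 \<and>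
                tpoch (a i * q * z i) q p (n i) \<noteq> 0 \<and> tpoch (a i * q / z i) q p (n i) \<noteq> 0"
    and "\<forall>i<m. \<forall>k\<le>n i. tpoch q q p k \<noteq> 0 \<and> tpoch (a i ^ 2 * q ^ (n i + 1)) q p k \<noteq> 0 \<and>
                tpoch (a i * c i) q p k \<noteq> 0 \<and> tpoch (a i * q powi (1 - int (n i)) / c i) q p k \<noteq> 0 \<and>
                tpoch (a i * q * z i) q p k \<noteq> 0 \<and> tpoch (a i * q / z i) q p k \<noteq> 0"
    and "\<forall>i<m. tpoch (c i * z i) q p (n i) \<noteq> 0 \<and> tpoch (c i / z i) q p (n i) \<noteq> 0 \<and>
                (\<forall>j\<le>n i. tpoch (c i * (a i * q ^ j)) q p (n i) \<noteq> 0 \<and>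
                           tpoch (c i / (a i * q ^ j)) q p (n i) \<noteq> 0)"
  shows "(\<Prod>i<m. (tpoch (a i ^ 2 * q) q p (n i) * tpoch q q p (n i)
                    * tpoch (c i * z i) q p (n i) * tpoch (c i / z i) q p (n i))
                 / (tpoch (a i * c i) q p (n i) * tpoch (c i / a i) q p (n i)
                    * tpoch (a i * q * z i) q p (n i) * tpoch (a i * q / z i) q p (n i))) * f z
       = (\<Sum>k\<in>PiE {..<m} (\<lambda>i. {..n i}).
            (\<Prod>i<m. q ^ k i * theta (a i ^ 2 * q ^ (2 * k i)) p / theta (a i ^ 2) p
               * (tpoch (q powi (- int (n i))) q p (k i) * tpoch (a i ^ 2) q p (k i)
                  * tpoch (a i * q / c i) q p (k i) * tpoch (a i * c i * q ^ n i) q p (k i)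
                  * tpoch (a i * z i) q p (k i) * tpoch (a i / z i) q p (k i))
               / (tpoch q q p (k i) * tpoch (a i ^ 2 * q ^ (n i + 1)) q p (k i)
                  * tpoch (a i * c i) q p (k i) * tpoch (a i * q powi (1 - int (n i)) / c i) q p (k i)
                  * tpoch (a i * q * z i) q p (k i) * tpoch (a i * q / z i) q p (k i)))
            * f (\<lambda>i. a i * q ^ k i))"
proof -
  have p: "norm p < 1" "p \<noteq> 0" using assms by auto
  have q: "q \<noteq> 0" using assms by auto
  have hz: "\<forall>i<m. a i \<noteq> 0 \<and> c i \<noteq> 0 \<and> z i \<noteq> 0" using assms by auto
  have OVi: "Lfac q p (a i) (c i) (z i) (n i) * (G (z i) / (tpoch (c i * z i) q p (n i) * tpoch (c i / z i) q p (n i)))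
       = (\<Sum>k\<in>{..n i}. Wfac q p (a i) (c i) (z i) (n i) k * (G (a i * q ^ k) / (tpoch (c i * (a i * q ^ k)) q p (n i) * tpoch (c i / (a i * q ^ k)) q p (n i))))"
    if i: "i < m" and VG: "Vn p (n i) G" for i G
  proof (rule OV_full[OF p q _ _ VG])
    show "c i \<noteq> 0" "z i \<noteq> 0" "a i \<noteq> 0" using hz i by auto
    show "theta (a i ^ 2) p \<noteq> 0" using assms(8) i by auto
    show "tpoch (a i * c i) q p (n i) \<noteq> 0" "tpoch (c i / a i) q p (n i) \<noteq> 0"
       "tpoch (a i * q * z i) q p (n i) \<noteq> 0" "tpoch (a i * q / z i) q p (n i) \<noteq> 0"
      using assms(9) i by auto
    show "\<forall>k\<le>n i. tpoch q q p k \<noteq> 0 \<and> tpoch (a i ^ 2 * q ^ (n i + 1)) q p k \<noteq> 0 \<and>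
                tpoch (a i * c i) q p k \<noteq> 0 \<and> tpoch (a i * q powi (1 - int (n i)) / c i) q p k \<noteq> 0"
      using assms(10) i by auto
    show "tpoch (c i * z i) q p (n i) * tpoch (c i / z i) q p (n i) \<noteq> 0" using assms(11) i by auto
    show "\<forall>j\<le>n i. tpoch (c i * (a i * q ^ j)) q p (n i) * tpoch (c i / (a i * q ^ j)) q p (n i) \<noteq> 0"
      using assms(11) i by auto
  qed
  have Dcz: "\<forall>i<m. tpoch (c i * z i) q p (n i) * tpoch (c i / z i) q p (n i) \<noteq> 0" using assms(11) by auto
  have Dcn: "\<forall>i<m. \<forall>j\<le>n i. tpoch (c i * (a i * q ^ j)) q p (n i) * tpoch (c i / (a i * q ^ j)) q p (n i) \<noteq> 0"
    using assms(11) by auto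
  have M: "(\<Prod>i<m. Lfac q p (a i) (c i) (z i) (n i)) * f z
     = (\<Sum>k\<in>PiE {..<m} (\<lambda>i. {..n i}). (\<Prod>i<m. Wfac q p (a i) (c i) (z i) (n i) (k i))
          * f (\<lambda>i. if i < m then a i * q ^ k i else z i))"
    by (rule multi[OF p q assms(6) hz OVi Dcz Dcn]) auto
  have loc: "f (\<lambda>i. if i < m then a i * q ^ k i else z i) = f (\<lambda>i. a i * q ^ k i)" for k
    by (rule Wspace_local[OF assms(6)]) simp
  show ?thesis using M unfolding loc Lfac_def Wfac_def .
qed


end
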